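(* Let $n\ge5$. The map $\sigma:\mathcal{T}_n/\!\sim\;\to\mathcal{B}_n$ is a bijection.
   Context: $\mathcal{T}_n$ is the set of triangulations of the punctured regular $n$-gon $\mathcal{P}_n$ (a regular $n$-gon with a puncture in its center), i.e. maximal sets of pairwise non-crossing tagged diagonals: untagged arcs between border vertices $a\neq b$ homotopic to the counterclockwise border path from $a$ to $b$ passing through at least $3$ border vertices, and arcs from the puncture to a border vertex with a tag $\pm1$, where two puncture arcs at $a,c$ with tags $\epsilon,\epsilon'$ cross iff $a\ne c$ and $\epsilon\ne\epsilon'$. The relation $\sim$ is generated by rotating the polygon and by inverting all tags. $\mathcal{B}_n$ is the set of equivalence classes of planar rooted trees such that every node other than the root has either two or no children (so each full subtree not containing the root is a full binary tree), the tree has exactly $n$ leaves, and two trees are equivalent if one is obtained from the other by (cyclically) rotating the subtrees at the root. The map $\sigma$: given $\Delta$, when two diagonals join the puncture to the same border vertex draw one of them as a loop at that vertex enclosing the puncture (the other lying inside, forming a self-folded triangle). Take one node for each triangle of $\Delta$; join two triangles by an edge if they are adjacent and their common side is not an arc from the puncture to the border (a loop does not count as such an arc); for each border edge of a triangle draw an edge from that triangle's node crossing the border edge to a new leaf outside the polygon; finally identify all nodes of triangles having the puncture as a vertex into a single root. With the planar embedding inherited from the polygon, this gives a tree whose class in $\mathcal{B}_n$ is $\sigma(\Delta)$; it depends only on the $\sim$-class of $\Delta$. *)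

theory Defs
  imports Main
begin

section \<open>The punctured n-gon: vertices 0..n-1 labelled counterclockwise\<close>

text \<open>Counterclockwise distance from border vertex a to border vertex b (for a, b < n);
  the ccw border path from a to b passes through ccw_dist n a b + 1 border vertices.\<close>
definition ccw_dist :: "nat \<Rightarrow> nat \<Rightarrow> nat \<Rightarrow> nat" where
  "ccw_dist n a b = (b + n - a) mod n"

text \<open>Border edges (edge i joins vertex i to vertex i+1 mod n) of the ccw path from a to b.\<close>
definition bd_edges :: "nat \<Rightarrow> nat \<Rightarrow> nat \<Rightarrow> nat set" where
  "bd_edges n a b = {(a + i) mod n | i. i < ccw_dist n a b}"

definition bd_inner :: "nat \<Rightarrow> nat \<Rightarrow> nat \<Rightarrow> nat set" where
  "bd_inner n a b = {(a + i) mod n | i. 0 < i \<and> i < ccw_dist n a b}"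

text \<open>Tagged arcs: Bd a b is the untagged arc from a to b homotopic to the ccw border path
  from a to b; Pu a e is the arc from the puncture to a with tag +1 (e = True) or -1 (e = False).\<close>
datatype tarc = Bd nat nat | Pu nat bool

definition tagged_diags :: "nat \<Rightarrow> tarc set" where
  "tagged_diags n =
     {Bd a b | a b. a < n \<and> b < n \<and> a \<noteq> b \<and> ccw_dist n a b + 1 \<ge> 3}
   \<union> {Pu a e | a e. a < n}"

text \<open>Crossing: two border arcs cross iff the regions they cut off (away from the puncture),
  described by their sets of border edges, are neither nested nor disjoint; a border arc
  crosses a puncture arc iff the latter ends strictly inside the former's border path;
  puncture arcs cross as in the paper.\<close>
fun crosses :: "nat \<Rightarrow> tarc \<Rightarrow> tarc \<Rightarrow> bool" where
  "crosses n (Bd a b) (Bd c d) =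
     (\<not> (bd_edges n a b \<subseteq> bd_edges n c d \<or> bd_edges n c d \<subseteq> bd_edges n a b
         \<or> bd_edges n a b \<inter> bd_edges n c d = {}))"
| "crosses n (Bd a b) (Pu c e) = (c \<in> bd_inner n a b)"
| "crosses n (Pu c e) (Bd a b) = (c \<in> bd_inner n a b)"
| "crosses n (Pu a e) (Pu c e') = (a \<noteq> c \<and> e \<noteq> e')"

definition noncrossing :: "nat \<Rightarrow> tarc set \<Rightarrow> bool" where
  "noncrossing n S = (\<forall>x\<in>S. \<forall>y\<in>S. \<not> crosses n x y)"

definition triangulation :: "nat \<Rightarrow> tarc set \<Rightarrow> bool" where
  "triangulation n T =
     (T \<subseteq> tagged_diags n \<and> noncrossing n T \<and>
      (\<forall>S. T \<subseteq> S \<and> S \<subseteq> tagged_diags n \<and> noncrossing n S \<longrightarrow> S = T))"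

definition Tri :: "nat \<Rightarrow> tarc set set" where
  "Tri n = {T. triangulation n T}"

fun rot_arc :: "nat \<Rightarrow> tarc \<Rightarrow> tarc" where
  "rot_arc n (Bd a b) = Bd ((a + 1) mod n) ((b + 1) mod n)"
| "rot_arc n (Pu a e) = Pu ((a + 1) mod n) e"

fun flip_arc :: "tarc \<Rightarrow> tarc" where
  "flip_arc (Bd a b) = Bd a b"
| "flip_arc (Pu a e) = Pu a (\<not> e)"

definition tri_step :: "nat \<Rightarrow> tarc set \<Rightarrow> tarc set \<Rightarrow> bool" where
  "tri_step n X Y = (Y = rot_arc n ` X \<or> Y = flip_arc ` X)"

definition tri_rel :: "nat \<Rightarrow> (tarc set \<times> tarc set) set" where
  "tri_rel n = {(X, Y). X \<in> Tri n \<and> Y \<in> Tri n \<and> equivclp (tri_step n) X Y}"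

datatype fbt = Lf | Nd fbt fbt

fun leaves :: "fbt \<Rightarrow> nat" where
  "leaves Lf = 1"
| "leaves (Nd l r) = leaves l + leaves r"

text \<open>A planar rooted tree whose non-root nodes have two or no children is given by the
  ordered list of the (full binary) subtrees at the root.\<close>
definition root_leaves :: "fbt list \<Rightarrow> nat" where
  "root_leaves ts = (if ts = [] then 1 else sum_list (map leaves ts))"

definition Btrees :: "nat \<Rightarrow> fbt list set" where
  "Btrees n = {ts. root_leaves ts = n}"

definition brel :: "nat \<Rightarrow> (fbt list \<times> fbt list) set" where
  "brel n = {(s, t). s \<in> Btrees n \<and> t \<in> Btrees n \<and> (\<exists>k. t = rotate k s)}"

definition B_cls :: "nat \<Rightarrow> fbt list set set" where
  "B_cls n = Btrees n // brel n"

definition T_cls :: "nat \<Rightarrow> tarc set set set" where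
  "T_cls n = Tri n // tri_rel n"

text \<open>(a,b) is a side of a triangle of T: a border edge or a border arc of T.\<close>
definition side :: "nat \<Rightarrow> tarc set \<Rightarrow> nat \<Rightarrow> nat \<Rightarrow> bool" where
  "side n T a b = (ccw_dist n a b = 1 \<or> Bd a b \<in> T)"

text \<open>Subtree hanging off the side (a,b) (away from the puncture): a leaf if (a,b) is a border
  edge, otherwise the node of the triangle (a,v,b) of T inside the region, with the subtrees
  through the sides (a,v) and (v,b), in counterclockwise order. The first nat is fuel.\<close>
fun subf :: "nat \<Rightarrow> tarc set \<Rightarrow> nat \<Rightarrow> nat \<Rightarrow> nat \<Rightarrow> fbt" where
  "subf n T 0 a b = Lf"
| "subf n T (Suc k) a b =
     (if ccw_dist n a b \<le> 1 then Lf
      else (let v = (THE v. v \<in> bd_inner n a b \<and> side n T a v \<and> side n T v b)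
            in Nd (subf n T k a v) (subf n T k v b)))"

definition subt :: "nat \<Rightarrow> tarc set \<Rightarrow> nat \<Rightarrow> nat \<Rightarrow> fbt" where
  "subt n T a b = subf n T (ccw_dist n a b) a b"

text \<open>sigma on a triangulation: if T contains both tagged versions of the puncture arc at c
  (self-folded triangle with loop at c), the root has one child, the triangle (c,v,c) bounded
  by the loop; otherwise the puncture triangles (p_i, p_(i+1), puncture) are merged into the
  root, whose children in ccw order hang off the sides (p_i, p_(i+1)).\<close>
definition sigma_tri :: "nat \<Rightarrow> tarc set \<Rightarrow> fbt list" where
  "sigma_tri n T =
     (if \<exists>c. Pu c True \<in> T \<and> Pu c False \<in> T then
        (let c = (THE c. Pu c True \<in> T \<and> Pu c False \<in> T);
             v = (THE v. v < n \<and> v \<noteq> c \<and> side n T c v \<and> side n T v c)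
         in [Nd (subt n T c v) (subt n T v c)])
      else
        (let ps = sorted_list_of_set {c. \<exists>e. Pu c e \<in> T}; k = length ps
         in map (\<lambda>i. subt n T (ps ! i) (ps ! ((i + 1) mod k))) [0..<k]))"

definition sigma_cls :: "nat \<Rightarrow> tarc set set \<Rightarrow> fbt list set" where
  "sigma_cls n C = brel n `` {sigma_tri n (SOME T. T \<in> C)}"

end

theory Submission
  imports Defs "HOL-Number_Theory.Cong"
begin
definition vv :: "nat \<Rightarrow> nat \<Rightarrow> nat \<Rightarrow> nat" where
  "vv n p x = (p + x) mod n"

lemma vv_lt: "0 < n \<Longrightarrow> vv n p x < n" by (simp add: vv_def)

lemma vv_add_n: "vv n p (x + n) = vv n p x" by (simp add: vv_def add.assoc[symmetric])

lemma vv_n: "vv n p n = vv n p 0" by (simp add: vv_def)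

lemma vv_shift: "vv n (p + b) x = vv n p (b + x)" by (simp add: vv_def add.assoc)

lemma vv_modp: "vv n (p mod n) x = vv n p x" by (simp add: vv_def mod_add_left_eq)

lemma vv_inj: "x < n \<Longrightarrow> y < n \<Longrightarrow> vv n p x = vv n p y \<Longrightarrow> x = y"
  unfolding vv_def
  by (metis cong_add_lcancel_nat cong_def cong_less_imp_eq_nat le0)

lemma vv_inj_on: "inj_on (vv n p) {..<n}"
  by (auto intro: inj_onI vv_inj)

lemma vv_repr: "a < n \<Longrightarrow> c < n \<Longrightarrow> a = vv n c ((a + n - c) mod n)"
  unfolding vv_def by (simp add: mod_add_right_eq)

lemma ccw_lt: "0 < n \<Longrightarrow> ccw_dist n a b < n" by (simp add: ccw_dist_def)

lemma ccw_add: "a < n \<Longrightarrow> b < n \<Longrightarrow> (a + ccw_dist n a b) mod n = b"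
  unfolding ccw_dist_def by (simp add: mod_add_right_eq)

lemma ccw_vv:
  assumes "0 < n" "x \<le> y" "y - x < n"
  shows "ccw_dist n (vv n p x) (vv n p y) = y - x"
proof -
  have "((p + y) mod n + n - (p + x) mod n) mod n = (y - x) mod n"
  proof -
    have "int (((p + y) mod n + n - (p + x) mod n)) = int ((p + y) mod n) + int n - int ((p + x) mod n)"
      proof -
      have "(p + x) mod n < n" using assms by simp
      thus ?thesis by (simp add: of_nat_diff)
    qed
    hence "int (((p + y) mod n + n - (p + x) mod n)) mod int n = ((int p + int y) mod int n + int n - (int p + int x) mod int n) mod int n"
      by (simp add: zmod_int)
    also have "\<dots> = ((int p + int y) - (int p + int x)) mod int n"
      by (metis mod_add_self2 mod_diff_cong mod_mod_trivial)
    also have "\<dots> = (int y - int x) mod int n" by simp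
    also have "\<dots> = int ((y - x) mod n)" using assms by (simp add: zmod_int of_nat_diff)
    finally show ?thesis by (metis of_nat_eq_iff zmod_int)
  qed
  thus ?thesis using assms by (simp add: ccw_dist_def vv_def)
qed

lemma edges_vv:
  assumes "0 < n" "x \<le> y" "y - x < n"
  shows "bd_edges n (vv n p x) (vv n p y) = vv n p ` {x..<y}"
proof -
  have e: "\<And>i. (vv n p x + i) mod n = vv n p (x + i)" by (simp add: vv_def mod_add_left_eq add.assoc)
  show ?thesis unfolding bd_edges_def ccw_vv[OF assms] e
  proof (intro equalityI subsetI)
    fix z assume "z \<in> {vv n p (x + i) |i. i < y - x}"
    then obtain i where "z = vv n p (x + i)" "i < y - x" by auto
    thus "z \<in> vv n p ` {x..<y}" by (intro image_eqI[of _ _ "x+i"]) auto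
  next
    fix z assume "z \<in> vv n p ` {x..<y}"
    then obtain j where "z = vv n p j" "x \<le> j" "j < y" by auto
    thus "z \<in> {vv n p (x + i) |i. i < y - x}" by (intro CollectI exI[of _ "j - x"]) auto
  qed
qed

lemma inner_vv:
  assumes "0 < n" "x \<le> y" "y - x < n"
  shows "bd_inner n (vv n p x) (vv n p y) = vv n p ` {x<..<y}"
proof -
  have e: "\<And>i. (vv n p x + i) mod n = vv n p (x + i)" by (simp add: vv_def mod_add_left_eq add.assoc)
  show ?thesis unfolding bd_inner_def ccw_vv[OF assms] e
  proof (intro equalityI subsetI)
    fix z assume "z \<in> {vv n p (x + i) |i. 0 < i \<and> i < y - x}"
    then obtain i where "z = vv n p (x + i)" "0 < i" "i < y - x" by auto
    thus "z \<in> vv n p ` {x<..<y}" by (intro image_eqI[of _ _ "x+i"]) auto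
  next
    fix z assume "z \<in> vv n p ` {x<..<y}"
    then obtain j where "z = vv n p j" "x < j" "j < y" by auto
    thus "z \<in> {vv n p (x + i) |i. 0 < i \<and> i < y - x}" by (intro CollectI exI[of _ "j - x"]) auto
  qed
qed

lemma inj_on_image_subset_iff:
  assumes "inj_on f C" "A \<subseteq> C" "B \<subseteq> C"
  shows "f ` A \<subseteq> f ` B \<longleftrightarrow> A \<subseteq> B"
  using inj_on_image_mem_iff[OF assms(1) _ assms(3)] assms(2) by blast

fun lam :: "nat \<times> nat \<Rightarrow> nat \<times> nat \<Rightarrow> bool" where
  "lam (x, y) (x', y') = ((x' \<le> x \<and> y \<le> y') \<or> (x \<le> x' \<and> y' \<le> y) \<or> y \<le> x' \<or> y' \<le> x)"

definition vp :: "nat \<Rightarrow> nat \<times> nat \<Rightarrow> bool" where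
  "vp n P = (fst P < snd P \<and> snd P \<le> n \<and> snd P - fst P < n)"

lemma crosses_vv:
  assumes "0 < n" "x < y" "y \<le> n" "y - x < n" "x' < y'" "y' \<le> n" "y' - x' < n"
  shows "crosses n (Bd (vv n p x) (vv n p y)) (Bd (vv n p x') (vv n p y')) \<longleftrightarrow> \<not> lam (x, y) (x', y')"
proof -
  have s1: "{x..<y} \<subseteq> {..<n}" "{x'..<y'} \<subseteq> {..<n}" using assms by auto
  have i: "inj_on (vv n p) {..<n}" by (rule vv_inj_on)
  have a: "vv n p ` {x..<y} \<subseteq> vv n p ` {x'..<y'} \<longleftrightarrow> {x..<y} \<subseteq> {x'..<y'}"
    by (rule inj_on_image_subset_iff[OF i s1])
  have b: "vv n p ` {x'..<y'} \<subseteq> vv n p ` {x..<y} \<longleftrightarrow> {x'..<y'} \<subseteq> {x..<y}"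
    by (rule inj_on_image_subset_iff[OF i s1(2) s1(1)])
  have c: "vv n p ` {x..<y} \<inter> vv n p ` {x'..<y'} = vv n p ` ({x..<y} \<inter> {x'..<y'})"
    by (rule inj_on_image_Int[OF i s1, symmetric])
  have d: "{x..<y} \<inter> {x'..<y'} = {} \<longleftrightarrow> y \<le> x' \<or> y' \<le> x"
  proof
    assume h: "{x..<y} \<inter> {x'..<y'} = {}"
    show "y \<le> x' \<or> y' \<le> x"
    proof (rule ccontr)
      assume "\<not> ?thesis"
      hence "max x x' \<in> {x..<y} \<inter> {x'..<y'}" using assms(2,5) by auto
      thus False using h by blast
    qed
  qed auto
  show ?thesis using assms
    unfolding crosses.simps edges_vv[OF assms(1) less_imp_le[OF assms(2)] assms(4)]
      edges_vv[OF assms(1) less_imp_le[OF assms(5)] assms(7)] a b c image_is_empty d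
      atLeastLessThan_subset_iff lam.simps by auto
qed

lemma crosses_vv_pu:
  assumes "0 < n" "x < y" "y \<le> n" "y - x < n" "q < n"
  shows "crosses n (Bd (vv n p x) (vv n p y)) (Pu (vv n p q) e) \<longleftrightarrow> x < q \<and> q < y"
proof -
  have "vv n p q \<in> vv n p ` {x<..<y} \<longleftrightarrow> q \<in> {x<..<y}"
    by (rule inj_on_image_mem_iff[OF vv_inj_on]) (use assms in auto)
  thus ?thesis using assms by (simp add: inner_vv)
qed

lemma lin_inj:
  assumes "x < y" "y \<le> n" "x' < y'" "y' \<le> n" "vv n p x = vv n p x'" "vv n p y = vv n p y'"
  shows "x = x' \<and> y = y'"
proof -
  have "x = x'" using assms vv_inj[of x n x' p] by auto
  moreover have "y = y'"
  proof (cases "y = n \<or> y' = n")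
    case True
    have "0 < n" using assms by simp
    moreover have "y' = n \<or> y' < n" "y = n \<or> y < n" using assms by auto
    ultimately show ?thesis
      using assms vv_inj[of 0 n y' p] vv_inj[of 0 n y p] True by (auto simp: vv_n)
  next
    case False
    then show ?thesis using assms vv_inj[of y n y' p] by auto
  qed
  ultimately show ?thesis by simp
qed

fun polyL :: "fbt \<Rightarrow> nat \<Rightarrow> (nat \<times> nat) set" where
  "polyL Lf a = {}"
| "polyL (Nd l r) a = insert (a, a + leaves l + leaves r) (polyL l a \<union> polyL r (a + leaves l))"

fun posl :: "fbt list \<Rightarrow> nat \<Rightarrow> nat list" where
  "posl [] a = []"
| "posl (t # ts) a = a # posl ts (a + leaves t)"

fun arcsL :: "fbt list \<Rightarrow> nat \<Rightarrow> (nat \<times> nat) set" where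
  "arcsL [] a = {}"
| "arcsL (t # ts) a = polyL t a \<union> arcsL ts (a + leaves t)"

abbreviation sl :: "fbt list \<Rightarrow> nat" where
  "sl ts \<equiv> sum_list (map leaves ts)"

lemma leaves_pos: "1 \<le> leaves t"
  by (induction t) auto

lemma lam_sym: "lam P Q = lam Q P"
  by (cases P; cases Q) auto

lemma polyL_bounds: "(x, y) \<in> polyL t a \<Longrightarrow> a \<le> x \<and> x + 2 \<le> y \<and> y \<le> a + leaves t"
proof (induction t arbitrary: a)
  case Lf then show ?case by simp
next
  case (Nd l r)
  have "1 \<le> leaves l" "1 \<le> leaves r" by (rule leaves_pos)+
  with Nd show ?case by (auto dest!: Nd.IH)
qed

lemma polyL_finite: "finite (polyL t a)"
  by (induction t arbitrary: a) auto

lemma polyL_card: "card (polyL t a) = leaves t - 1"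
proof (induction t arbitrary: a)
  case Lf then show ?case by simp
next
  case (Nd l r)
  have d: "polyL l a \<inter> polyL r (a + leaves l) = {}"
    using polyL_bounds[of _ _ l a] polyL_bounds[of _ _ r "a + leaves l"] by fastforce
  have n: "(a, a + leaves l + leaves r) \<notin> polyL l a \<union> polyL r (a + leaves l)"
    using polyL_bounds[of _ _ l a] polyL_bounds[of _ _ r "a + leaves l"] leaves_pos[of l] leaves_pos[of r]
    by fastforce
  have "card (polyL (Nd l r) a) = Suc (card (polyL l a) + card (polyL r (a + leaves l)))"
    using d n by (simp add: card_Un_disjoint polyL_finite)
  then show ?case using Nd.IH leaves_pos[of l] leaves_pos[of r] by simp
qed

lemma polyL_lam: "P \<in> polyL t a \<Longrightarrow> Q \<in> polyL t a \<Longrightarrow> lam P Q"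
proof (induction t arbitrary: a P Q)
  case Lf then show ?case by simp
next
  case (Nd l r)
  have top: "lam (a, a + leaves l + leaves r) R" if "R \<in> polyL (Nd l r) a" for R
  proof -
    obtain x y where "R = (x, y)" by force
    with that polyL_bounds[of x y "Nd l r" a] show ?thesis by auto
  qed
  have lr: "lam R1 R2" if "R1 \<in> polyL l a" "R2 \<in> polyL r (a + leaves l)" for R1 R2
  proof -
    obtain x y x' y' where "R1 = (x, y)" "R2 = (x', y')" by force
    with that polyL_bounds[of x y l a] polyL_bounds[of x' y' r "a + leaves l"] show ?thesis by auto
  qed
  let ?T = "(a, a + leaves l + leaves r)"
  have PQ: "P \<in> polyL (Nd l r) a" "Q \<in> polyL (Nd l r) a" by (fact Nd.prems)+
  have "P = ?T \<or> P \<in> polyL l a \<or> P \<in> polyL r (a + leaves l)"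
       "Q = ?T \<or> Q \<in> polyL l a \<or> Q \<in> polyL r (a + leaves l)" using PQ by auto
  then show ?case
  proof (elim disjE)
  qed (use top[OF PQ(1)] top[OF PQ(2)] lr Nd.IH lam_sym in metis)+
qed

lemma posl_length[simp]: "length (posl ts a) = length ts"
  by (induction ts arbitrary: a) auto

lemma posl_bounds: "q \<in> set (posl ts a) \<Longrightarrow> a \<le> q \<and> q < a + sl ts"
proof (induction ts arbitrary: a)
  case Nil then show ?case by simp
next
  case (Cons t ts)
  have "1 \<le> leaves t" by (rule leaves_pos)
  with Cons show ?case by (auto dest!: Cons.IH)
qed

lemma posl_sorted: "sorted_wrt (<) (posl ts a)"
proof (induction ts arbitrary: a)
  case Nil then show ?case by simp
next
  case (Cons t ts)
  have "1 \<le> leaves t" by (rule leaves_pos)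
  with Cons show ?case by (auto dest!: posl_bounds)
qed

lemma posl_distinct: "distinct (posl ts a)"
  using posl_sorted strict_sorted_iff by blast

lemma posl_card: "card (set (posl ts a)) = length ts"
  using posl_distinct distinct_card by fastforce

lemma posl_nth: "i < length ts \<Longrightarrow> posl ts a ! i = a + sl (take i ts)"
proof (induction ts arbitrary: a i)
  case Nil then show ?case by simp
next
  case (Cons t ts)
  then show ?case by (cases i) auto
qed

lemma arcsL_bounds: "(x, y) \<in> arcsL ts a \<Longrightarrow> a \<le> x \<and> x + 2 \<le> y \<and> y \<le> a + sl ts"
proof (induction ts arbitrary: a)
  case Nil then show ?case by simp
next
  case (Cons t ts)
  then show ?case using polyL_bounds[of x y t a] by (auto dest!: Cons.IH)
qed

lemma arcsL_finite: "finite (arcsL ts a)"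
  by (induction ts arbitrary: a) (auto simp: polyL_finite)

lemma arcsL_card: "card (arcsL ts a) = sl ts - length ts"
proof (induction ts arbitrary: a)
  case Nil then show ?case by simp
next
  case (Cons t ts)
  have d: "polyL t a \<inter> arcsL ts (a + leaves t) = {}"
    using polyL_bounds[of _ _ t a] arcsL_bounds[of _ _ ts "a + leaves t"] by fastforce
  have "card (arcsL (t # ts) a) = card (polyL t a) + card (arcsL ts (a + leaves t))"
    using d by (simp add: card_Un_disjoint polyL_finite arcsL_finite)
  moreover have "length ts \<le> sl ts"
  proof (induction ts)
    case (Cons s ss) then show ?case using leaves_pos[of s] by simp
  qed simp
  ultimately show ?case using Cons.IH polyL_card leaves_pos[of t] by simp
qed

lemma arcsL_lam: "P \<in> arcsL ts a \<Longrightarrow> Q \<in> arcsL ts a \<Longrightarrow> lam P Q"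
proof (induction ts arbitrary: a)
  case Nil then show ?case by simp
next
  case (Cons t ts)
  have lr: "lam R1 R2" if "R1 \<in> polyL t a" "R2 \<in> arcsL ts (a + leaves t)" for R1 R2
  proof -
    obtain x y x' y' where "R1 = (x, y)" "R2 = (x', y')" by force
    with that polyL_bounds[of x y t a] arcsL_bounds[of x' y' ts "a + leaves t"] show ?thesis by auto
  qed
  from Cons.prems show ?case
    using lr Cons.IH polyL_lam lam_sym by (metis Un_iff arcsL.simps(2))
qed

lemma arcsL_nopus: "(x, y) \<in> arcsL ts a \<Longrightarrow> q \<in> set (posl ts a) \<Longrightarrow> \<not> (x < q \<and> q < y)"
proof (induction ts arbitrary: a)
  case Nil then show ?case by simp
next
  case (Cons t ts)
  show ?case using Cons.prems Cons.IH polyL_bounds[of x y t a] arcsL_bounds[of x y ts "a + leaves t"]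
      posl_bounds[of q ts "a + leaves t"]
    by auto
qed

lemma polyL_nth_sub: "i < length ts \<Longrightarrow> polyL (ts ! i) (posl ts a ! i) \<subseteq> arcsL ts a"
proof (induction ts arbitrary: a i)
  case Nil then show ?case by simp
next
  case (Cons t ts)
  then show ?case by (cases i) auto
qed

lemma polyL_top: "2 \<le> leaves t \<Longrightarrow> (a, a + leaves t) \<in> polyL t a"
  by (cases t) auto

lemma poly_complete:
  "i < j \<Longrightarrow> (\<forall>(x, y)\<in>A. i \<le> x \<and> x + 2 \<le> y \<and> y \<le> j) \<Longrightarrow> (\<forall>P\<in>A. \<forall>Q\<in>A. lam P Q)
   \<Longrightarrow> \<exists>t. leaves t = j - i \<and> A \<subseteq> polyL t i"
proof (induction "j - i" arbitrary: i j A rule: less_induct)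
  case less
  show ?case
  proof (cases "j - i = 1")
    case True
    hence "A = {}" using less.prems(2) by fastforce
    with True show ?thesis by (intro exI[of _ Lf]) auto
  next
    case False
    hence ji: "i + 2 \<le> j" using less.prems(1) by simp
    define A0 where "A0 = A - {(i, j)}"
    have A0b: "\<And>x y. (x, y) \<in> A0 \<Longrightarrow> i \<le> x \<and> x + 2 \<le> y \<and> y \<le> j \<and> (x, y) \<noteq> (i, j)"
      using less.prems(2) unfolding A0_def by auto
    have A0l: "\<And>P Q. P \<in> A0 \<Longrightarrow> Q \<in> A0 \<Longrightarrow> lam P Q"
      using less.prems(3) unfolding A0_def by auto
    have "\<exists>v. i < v \<and> v < j \<and> (\<forall>(x, y)\<in>A0. y \<le> v \<or> v \<le> x)"
    proof (cases "\<exists>y. (i, y) \<in> A0")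
      case True
      define Y where "Y = {y. (i, y) \<in> A0}"
      have fY: "finite Y" by (rule finite_subset[of _ "{..j}"]) (auto simp: Y_def dest: A0b)
      have nY: "Y \<noteq> {}" using True Y_def by auto
      define v where "v = Max Y"
      have vY: "v \<in> Y" using Max_in[OF fY nY] v_def by simp
      have vm: "\<And>y. y \<in> Y \<Longrightarrow> y \<le> v" using Max_ge[OF fY] v_def by simp
      have iv: "(i, v) \<in> A0" using vY Y_def by simp
      have "i < v" "v \<le> j" "v \<noteq> j" using A0b[OF iv] by auto
      moreover have "\<forall>(x, y)\<in>A0. y \<le> v \<or> v \<le> x"
      proof (clarify)
        fix x y assume xy: "(x, y) \<in> A0" "\<not> v \<le> x"
        have "lam (x, y) (i, v)" using A0l[OF xy(1) iv] .
        thus "y \<le> v" using A0b[OF xy(1)] xy(2) vm[of y] Y_def xy(1) by (cases "x = i") auto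
      qed
      ultimately show ?thesis by (intro exI[of _ v]) auto
    next
      case nI: False
      show ?thesis
      proof (cases "\<exists>x. (x, j) \<in> A0")
        case True
        define X where "X = {x. (x, j) \<in> A0}"
        have fX: "finite X" by (rule finite_subset[of _ "{..j}"]) (auto simp: X_def dest: A0b)
        have nX: "X \<noteq> {}" using True X_def by auto
        define v where "v = Min X"
        have vX: "v \<in> X" using Min_in[OF fX nX] v_def by simp
        have vm: "\<And>x. x \<in> X \<Longrightarrow> v \<le> x" using Min_le[OF fX] v_def by simp
        have vj: "(v, j) \<in> A0" using vX X_def by simp
        have "i \<le> v" "v < j" "v \<noteq> i" using A0b[OF vj] nI vj by auto
        moreover have "\<forall>(x, y)\<in>A0. y \<le> v \<or> v \<le> x"
        proof (clarify)
          fix x y assume xy: "(x, y) \<in> A0" "\<not> v \<le> x"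
          have "lam (x, y) (v, j)" using A0l[OF xy(1) vj] .
          thus "y \<le> v" using A0b[OF xy(1)] xy(2) vm[of x] X_def xy(1) by (cases "y = j") auto
        qed
        ultimately show ?thesis by (intro exI[of _ v]) auto
      next
        case False
        have "\<forall>(x, y)\<in>A0. y \<le> i + 1 \<or> i + 1 \<le> x"
        proof (clarify)
          fix x y assume xy: "(x, y) \<in> A0" "\<not> i + 1 \<le> x"
          hence "x = i" using A0b[OF xy(1)] by simp
          thus "y \<le> i + 1" using nI xy by auto
        qed
        then show ?thesis using ji by (intro exI[of _ "i + 1"]) auto
      qed
    qed
    then obtain v where v: "i < v" "v < j" "\<forall>(x, y)\<in>A0. y \<le> v \<or> v \<le> x" by blast
    define A1 where "A1 = {(x, y). (x, y) \<in> A0 \<and> y \<le> v}"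
    define A2 where "A2 = {(x, y). (x, y) \<in> A0 \<and> v \<le> x}"
    have "\<exists>l. leaves l = v - i \<and> A1 \<subseteq> polyL l i"
    proof (rule less.hyps)
      show "v - i < j - i" "i < v" using v by auto
      show "\<forall>(x, y)\<in>A1. i \<le> x \<and> x + 2 \<le> y \<and> y \<le> v" using A0b unfolding A1_def by auto
      show "\<forall>P\<in>A1. \<forall>Q\<in>A1. lam P Q" using A0l unfolding A1_def by (auto simp del: lam.simps)
    qed
    then obtain l where l: "leaves l = v - i" "A1 \<subseteq> polyL l i" by blast
    have "\<exists>r. leaves r = j - v \<and> A2 \<subseteq> polyL r v"
    proof (rule less.hyps)
      show "j - v < j - i" "v < j" using v by auto
      show "\<forall>(x, y)\<in>A2. v \<le> x \<and> x + 2 \<le> y \<and> y \<le> j" using A0b unfolding A2_def by auto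
      show "\<forall>P\<in>A2. \<forall>Q\<in>A2. lam P Q" using A0l unfolding A2_def by (auto simp del: lam.simps)
    qed
    then obtain r where r: "leaves r = j - v" "A2 \<subseteq> polyL r v" by blast
    have pe: "polyL (Nd l r) i = insert (i, j) (polyL l i \<union> polyL r v)"
      using l(1) r(1) v by simp
    have "A \<subseteq> insert (i, j) (A1 \<union> A2)"
      using v(3) unfolding A1_def A2_def A0_def by auto
    also have "\<dots> \<subseteq> polyL (Nd l r) i" using pe l r by auto
    finally show ?thesis using l(1) r(1) v by (intro exI[of _ "Nd l r"]) auto
  qed
qed

lemma regions_complete:
  "finite Q \<Longrightarrow> a \<in> Q \<Longrightarrow> Q \<subseteq> {a..<b} \<Longrightarrow> (\<forall>(x, y)\<in>A. a \<le> x \<and> x + 2 \<le> y \<and> y \<le> b)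
   \<Longrightarrow> (\<forall>P\<in>A. \<forall>Q\<in>A. lam P Q) \<Longrightarrow> (\<forall>(x, y)\<in>A. \<forall>q\<in>Q. \<not> (x < q \<and> q < y))
   \<Longrightarrow> \<exists>ts. sl ts = b - a \<and> set (posl ts a) = Q \<and> A \<subseteq> arcsL ts a"
proof (induction "card Q" arbitrary: a Q A rule: less_induct)
  case less
  have ab: "a < b" using less.prems(2,3) by auto
  show ?case
  proof (cases "Q = {a}")
    case True
    obtain t where t: "leaves t = b - a" "A \<subseteq> polyL t a"
      using poly_complete[OF ab less.prems(4,5)] by blast
    then show ?thesis using True by (intro exI[of _ "[t]"]) auto
  next
    case False
    define Q' where "Q' = Q - {a}"
    have fQ': "finite Q'" "Q' \<noteq> {}" using False less.prems(1,2) Q'_def by auto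
    define q where "q = Min Q'"
    have qQ: "q \<in> Q'" using Min_in[OF fQ'] q_def by simp
    have qm: "\<And>z. z \<in> Q' \<Longrightarrow> q \<le> z" using Min_le[OF fQ'(1)] q_def by simp
    have aq: "a < q" "q < b" using qQ less.prems(3) Q'_def by auto
    define A1 where "A1 = {(x, y). (x, y) \<in> A \<and> y \<le> q}"
    define A2 where "A2 = {(x, y). (x, y) \<in> A \<and> q \<le> x}"
    have split: "A \<subseteq> A1 \<union> A2"
    proof
      fix P assume "P \<in> A"
      moreover obtain x y where "P = (x, y)" by force
      moreover have "q \<in> Q" using qQ Q'_def by simp
      ultimately show "P \<in> A1 \<union> A2" using less.prems(6) unfolding A1_def A2_def by fastforce
    qed
    obtain t where t: "leaves t = q - a" "A1 \<subseteq> polyL t a"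
      using poly_complete[OF aq(1), of A1] less.prems(4,5) unfolding A1_def by fastforce
    have cQ': "card Q' < card Q" unfolding Q'_def by (rule card_Diff1_less[OF less.prems(1,2)])
    have "\<exists>ts. sl ts = b - q \<and> set (posl ts q) = Q' \<and> A2 \<subseteq> arcsL ts q"
    proof (rule less.hyps[OF cQ' fQ'(1) qQ])
      show "Q' \<subseteq> {q..<b}"
      proof
        fix z assume z: "z \<in> Q'"
        thus "z \<in> {q..<b}" using qm[OF z] less.prems(3) Q'_def by auto
      qed
      show "\<forall>(x, y)\<in>A2. q \<le> x \<and> x + 2 \<le> y \<and> y \<le> b" using less.prems(4) A2_def by auto
      show "\<forall>P\<in>A2. \<forall>Q\<in>A2. lam P Q" using less.prems(5) A2_def by (auto simp del: lam.simps)
      show "\<forall>(x, y)\<in>A2. \<forall>q\<in>Q'. \<not> (x < q \<and> q < y)" using less.prems(6) A2_def Q'_def by auto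
    qed
    then obtain ts where ts: "sl ts = b - q" "set (posl ts q) = Q'" "A2 \<subseteq> arcsL ts q" by blast
    have "a + leaves t = q" using t(1) aq by simp
    then show ?thesis using t ts aq split less.prems(2) Q'_def
      by (intro exI[of _ "t # ts"]) auto
  qed
qed

definition AL :: "nat \<Rightarrow> fbt list \<Rightarrow> (nat \<times> nat) set" where
  "AL n ts = {(x, y). (x, y) \<in> arcsL ts 0 \<and> y - x < n}"

definition bdimg :: "nat \<Rightarrow> nat \<Rightarrow> (nat \<times> nat) set \<Rightarrow> tarc set" where
  "bdimg n p A = (\<lambda>(x, y). Bd (vv n p x) (vv n p y)) ` A"

definition PS :: "nat \<Rightarrow> fbt list \<Rightarrow> nat \<Rightarrow> bool \<Rightarrow> tarc set" where
  "PS n ts p e = {Pu (vv n p q) e' | q e'. q \<in> set (posl ts 0) \<and> (e' = e \<or> length ts = 1)}"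

definition build :: "nat \<Rightarrow> fbt list \<Rightarrow> nat \<Rightarrow> bool \<Rightarrow> tarc set" where
  "build n ts p e = PS n ts p e \<union> bdimg n p (AL n ts)"

lemma Btrees_sl: "2 \<le> n \<Longrightarrow> ts \<in> Btrees n \<Longrightarrow> sl ts = n \<and> ts \<noteq> []"
  unfolding Btrees_def root_leaves_def by (auto split: if_splits)

lemma AL_bounds: "sl ts = n \<Longrightarrow> (x, y) \<in> AL n ts \<Longrightarrow> x + 2 \<le> y \<and> y \<le> n \<and> y - x < n"
  unfolding AL_def using arcsL_bounds[of x y ts 0] by auto

lemma posl0_bounds: "sl ts = n \<Longrightarrow> q \<in> set (posl ts 0) \<Longrightarrow> q < n"
  using posl_bounds[of q ts 0] by simp

lemma posl_single: "length ts = 1 \<Longrightarrow> set (posl ts a) = {a}"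
  by (cases ts) auto

lemma zero_in_posl: "ts \<noteq> [] \<Longrightarrow> 0 \<in> set (posl ts 0)"
  by (cases ts) auto

lemma build_diags:
  assumes "2 \<le> n" "sl ts = n"
  shows "build n ts p e \<subseteq> tagged_diags n"
proof
  fix X assume "X \<in> build n ts p e"
  then consider (P) q e' where "X = Pu (vv n p q) e'"
    | (B) x y where "X = Bd (vv n p x) (vv n p y)" "(x, y) \<in> AL n ts"
    unfolding build_def PS_def bdimg_def by auto
  then show "X \<in> tagged_diags n"
  proof cases
    case P then show ?thesis using assms vv_lt[of n] unfolding tagged_diags_def by auto
  next
    case B
    have b: "x + 2 \<le> y" "y \<le> n" "y - x < n" using AL_bounds[OF assms(2) B(2)] by auto
    have "vv n p x \<noteq> vv n p y"
    proof
      assume h: "vv n p x = vv n p y"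
      show False
      proof (cases "y = n")
        case True
        then have "vv n p x = vv n p 0" using h vv_n by simp
        hence "x = 0" using vv_inj[of x n 0 p] b assms by simp
        then show False using b True by simp
      next
        case False
        then show False using vv_inj[of x n y p] b h by simp
      qed
    qed
    moreover have "ccw_dist n (vv n p x) (vv n p y) = y - x" using ccw_vv[of n x y p] b assms by simp
    ultimately show ?thesis using B b assms vv_lt[of n] unfolding tagged_diags_def by auto
  qed
qed

lemma build_noncrossing:
  assumes "2 \<le> n" "sl ts = n"
  shows "noncrossing n (build n ts p e)"
  unfolding noncrossing_def
proof (intro ballI)
  fix X Y assume XY: "X \<in> build n ts p e" "Y \<in> build n ts p e"
  have n0: "0 < n" using assms by simp
  have PP: "\<not> crosses n (Pu (vv n p q) e1) (Pu (vv n p q') e2)"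
    if "q \<in> set (posl ts 0)" "q' \<in> set (posl ts 0)" "e1 = e \<or> length ts = 1" "e2 = e \<or> length ts = 1"
    for q q' e1 e2
  proof (cases "length ts = 1")
    case True then show ?thesis using that posl_single[of ts 0] by simp
  next
    case False then show ?thesis using that by simp
  qed
  have BP: "\<not> crosses n (Bd (vv n p x) (vv n p y)) (Pu (vv n p q) e1)"
    if "(x, y) \<in> AL n ts" "q \<in> set (posl ts 0)" for x y q e1
  proof -
    have b: "x < y" "y \<le> n" "y - x < n" using AL_bounds[OF assms(2) that(1)] by auto
    have "q < n" using posl0_bounds[OF assms(2) that(2)] .
    moreover have "(x, y) \<in> arcsL ts 0" using that(1) AL_def by simp
    ultimately show ?thesis using crosses_vv_pu[OF n0 b] arcsL_nopus[of x y ts 0 q] that(2) by simp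
  qed
  have BB: "\<not> crosses n (Bd (vv n p x) (vv n p y)) (Bd (vv n p x') (vv n p y'))"
    if "(x, y) \<in> AL n ts" "(x', y') \<in> AL n ts" for x y x' y'
  proof -
    have b: "x < y" "y \<le> n" "y - x < n" using AL_bounds[OF assms(2) that(1)] by auto
    have b': "x' < y'" "y' \<le> n" "y' - x' < n" using AL_bounds[OF assms(2) that(2)] by auto
    have "lam (x, y) (x', y')" using arcsL_lam that unfolding AL_def by blast
    thus ?thesis using crosses_vv[OF n0 b b'] by simp
  qed
  have cases: "(\<exists>q e1. Z = Pu (vv n p q) e1 \<and> q \<in> set (posl ts 0) \<and> (e1 = e \<or> length ts = 1))
     \<or> (\<exists>x y. Z = Bd (vv n p x) (vv n p y) \<and> (x, y) \<in> AL n ts)" if "Z \<in> build n ts p e" for Z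
    using that unfolding build_def PS_def bdimg_def by auto
  have sw: "\<And>c e a b. crosses n (Pu c e) (Bd a b) = crosses n (Bd a b) (Pu c e)" by simp
  from cases[OF XY(1)] cases[OF XY(2)] show "\<not> crosses n X Y"
    apply (elim disjE exE conjE)
    by (simp_all add: sw PP BP BB del: crosses.simps)
qed

lemma zero_n_arcsL:
  assumes h: "sl ts = n" "(0, n) \<in> arcsL ts 0" shows "length ts = 1"
proof (cases ts)
  case Nil then show ?thesis using h by simp
next
  case (Cons t ts')
  show ?thesis
  proof (cases "(0, n) \<in> polyL t 0")
    case True
    hence "n \<le> leaves t" using polyL_bounds[of 0 n t 0] by simp
    moreover have "leaves t + sl ts' = n" using h(1) Cons by simp
    ultimately have "sl ts' = 0" by linarith
    hence "ts' = []" using leaves_pos[of "hd ts'"] by (cases ts') auto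
    then show ?thesis using Cons by simp
  next
    case False
    hence "(0, n) \<in> arcsL ts' (leaves t)" using h(2) Cons by simp
    hence "leaves t \<le> 0" using arcsL_bounds[of 0 n ts' "leaves t"] by simp
    then show ?thesis using leaves_pos[of t] by simp
  qed
qed

lemma AL_eq: "sl ts = n \<Longrightarrow> AL n ts = arcsL ts 0 - {(0, n)}"
  unfolding AL_def using arcsL_bounds[of _ _ ts 0] by fastforce

lemma length_le_sl: "length ts \<le> sl ts"
proof (induction ts)
  case (Cons s ss) then show ?case using leaves_pos[of s] by simp
qed simp

lemma AL_card: "2 \<le> n \<Longrightarrow> sl ts = n \<Longrightarrow> card (AL n ts) = (if length ts = 1 then n - 2 else n - length ts)"
proof (cases "length ts = 1")
  case True
  assume n: "2 \<le> n" "sl ts = n"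
  then obtain t where t: "ts = [t]" using True by (cases ts) auto
  have "leaves t = n" using n t by simp
  hence "(0, n) \<in> arcsL ts 0" using polyL_top[of t 0] n t by simp
  then show ?thesis using True n AL_eq[OF n(2)] arcsL_card[of ts 0] arcsL_finite by simp
next
  case False
  assume n: "2 \<le> n" "sl ts = n"
  have "(0, n) \<notin> arcsL ts 0" using zero_n_arcsL[OF n(2)] False by blast
  then show ?thesis using False n AL_eq[OF n(2)] arcsL_card[of ts 0] by simp
qed

lemma bdimg_inj: "sl ts = n \<Longrightarrow> inj_on (\<lambda>(x, y). Bd (vv n p x) (vv n p y)) (AL n ts)"
proof (rule inj_onI)
  fix P Q assume "sl ts = n" "P \<in> AL n ts" "Q \<in> AL n ts"
    "(\<lambda>(x, y). Bd (vv n p x) (vv n p y)) P = (\<lambda>(x, y). Bd (vv n p x) (vv n p y)) Q"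
  moreover obtain x y x' y' where "P = (x, y)" "Q = (x', y')" by force
  ultimately show "P = Q" using AL_bounds[of ts n x y] AL_bounds[of ts n x' y'] lin_inj[of x y n x' y' p]
    by auto
qed

lemma build_card:
  assumes "2 \<le> n" "sl ts = n" "ts \<noteq> []"
  shows "finite (build n ts p e) \<and> card (build n ts p e) = n"
proof -
  have fA: "finite (AL n ts)" using arcsL_finite unfolding AL_def
    by (rule finite_subset[rotated]) auto
  have cB: "card (bdimg n p (AL n ts)) = card (AL n ts)"
    unfolding bdimg_def using card_image[OF bdimg_inj[OF assms(2)]] .
  have fB: "finite (bdimg n p (AL n ts))" unfolding bdimg_def using fA by simp
  have dj: "PS n ts p e \<inter> bdimg n p (AL n ts) = {}" unfolding PS_def bdimg_def by auto
  show ?thesis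
  proof (cases "length ts = 1")
    case True
    have "PS n ts p e = {Pu (vv n p 0) e, Pu (vv n p 0) (\<not> e)}"
      unfolding PS_def using posl_single[OF True, of 0] True by auto
    then have "finite (PS n ts p e)" "card (PS n ts p e) = 2" by auto
    then show ?thesis using fB cB dj AL_card[OF assms(1,2)] True assms(1)
      unfolding build_def by (simp add: card_Un_disjoint)
  next
    case False
    have eq: "PS n ts p e = (\<lambda>q. Pu (vv n p q) e) ` set (posl ts 0)"
      unfolding PS_def using False by auto
    have "inj_on (\<lambda>q. Pu (vv n p q) e) (set (posl ts 0))"
      by (rule inj_onI) (use posl0_bounds[OF assms(2)] vv_inj in blast)
    then have "finite (PS n ts p e)" "card (PS n ts p e) = length ts"
      using eq card_image[of "\<lambda>q. Pu (vv n p q) e" "set (posl ts 0)"] posl_card[of ts 0] by auto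
    moreover have "length ts \<le> n" using length_le_sl[of ts] assms by simp
    ultimately show ?thesis using fB cB dj AL_card[OF assms(1,2)] False
      unfolding build_def by (simp add: card_Un_disjoint)
  qed
qed

lemma repr_bd:
  assumes "0 < n" "a < n" "b < n" "c < n" "c \<notin> bd_inner n a b"
  shows "\<exists>x. a = vv n c x \<and> b = vv n c (x + ccw_dist n a b) \<and> x < n \<and> x + ccw_dist n a b \<le> n"
proof -
  define x where "x = (a + n - c) mod n"
  define d where "d = ccw_dist n a b"
  have ax: "a = vv n c x" unfolding x_def using vv_repr assms by simp
  have xn: "x < n" unfolding x_def using assms by simp
  have b: "b = vv n c (x + d)"
  proof -
    have "vv n c (x + d) = ((c + x) mod n + d) mod n" unfolding vv_def by (simp add: mod_add_left_eq add.assoc)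
    also have "\<dots> = (a + d) mod n" using ax vv_def by simp
    also have "\<dots> = b" using ccw_add assms d_def by simp
    finally show ?thesis by simp
  qed
  have "x + d \<le> n"
  proof (rule ccontr)
    assume "\<not> x + d \<le> n"
    hence i: "0 < n - x" "n - x < d" using xn by auto
    have "(a + (n - x)) mod n = c"
    proof -
      have "(a + (n - x)) mod n = ((c + x) mod n + (n - x)) mod n" using ax vv_def by simp
      also have "\<dots> = (c + x + (n - x)) mod n" by (simp add: mod_add_left_eq)
      also have "\<dots> = c" using xn assms by simp
      finally show ?thesis .
    qed
    hence "c \<in> bd_inner n a b" unfolding bd_inner_def d_def[symmetric] using i by blast
    thus False using assms by simp
  qed
  thus ?thesis using ax b xn d_def by blast
qed

lemma completion:
  assumes n: "2 \<le> n" and S: "S \<subseteq> tagged_diags n" "noncrossing n S" and c: "Pu c e \<in> S"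
  shows "\<exists>ts. ts \<in> Btrees n \<and> S \<subseteq> build n ts c e"
proof -
  have n0: "0 < n" using n by simp
  have cn: "c < n" using c S(1) unfolding tagged_diags_def by auto
  have nc: "\<And>X Y. X \<in> S \<Longrightarrow> Y \<in> S \<Longrightarrow> \<not> crosses n X Y" using S(2) unfolding noncrossing_def by blast
  have vc0: "vv n c 0 = c" using cn vv_def by simp
  define Q where "Q = {q. q < n \<and> (\<exists>e'. Pu (vv n c q) e' \<in> S)}"
  define A where "A = {(x, y). x + 2 \<le> y \<and> y \<le> n \<and> y - x < n \<and> Bd (vv n c x) (vv n c y) \<in> S}"
  have "\<exists>ts. sl ts = n - 0 \<and> set (posl ts 0) = Q \<and> A \<subseteq> arcsL ts 0"
  proof (rule regions_complete)
    show "finite Q" unfolding Q_def by (rule finite_subset[of _ "{..<n}"]) auto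
    show "0 \<in> Q" unfolding Q_def using c vc0 n0 by auto
    show "Q \<subseteq> {0..<n}" unfolding Q_def by auto
    show "\<forall>(x, y)\<in>A. 0 \<le> x \<and> x + 2 \<le> y \<and> y \<le> n" unfolding A_def by auto
    show "\<forall>P\<in>A. \<forall>Q\<in>A. lam P Q"
    proof (intro ballI)
      fix P R assume "P \<in> A" "R \<in> A"
      moreover obtain x y x' y' where "P = (x, y)" "R = (x', y')" by force
      ultimately have h: "x < y" "y \<le> n" "y - x < n" "x' < y'" "y' \<le> n" "y' - x' < n"
        "Bd (vv n c x) (vv n c y) \<in> S" "Bd (vv n c x') (vv n c y') \<in> S" "P = (x, y)" "R = (x', y')"
        unfolding A_def by auto
      have "\<not> crosses n (Bd (vv n c x) (vv n c y)) (Bd (vv n c x') (vv n c y'))" using nc h(7,8) by blast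
      thus "lam P R" using crosses_vv[OF n0 h(1-6), of c] h(9,10) by simp
    qed
    show "\<forall>(x, y)\<in>A. \<forall>q\<in>Q. \<not> (x < q \<and> q < y)"
    proof (clarify)
      fix x y q assume "(x, y) \<in> A" "q \<in> Q" "x < q" "q < y"
      then obtain e' where "Pu (vv n c q) e' \<in> S" "Bd (vv n c x) (vv n c y) \<in> S"
        "x < y" "y \<le> n" "y - x < n" "q < n" unfolding A_def Q_def by auto
      thus False using nc crosses_vv_pu[OF n0, of x y q c e'] \<open>x < q\<close> \<open>q < y\<close> by blast
    qed
  qed
  then obtain ts where ts: "sl ts = n" "set (posl ts 0) = Q" "A \<subseteq> arcsL ts 0" by auto
  have Qne: "0 \<in> Q" unfolding Q_def using c vc0 n0 by auto
  hence tsne: "ts \<noteq> []" using ts(2) by auto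
  have bt: "ts \<in> Btrees n" unfolding Btrees_def root_leaves_def using ts tsne by simp
  have lenQ: "length ts = card Q" using posl_card[of ts 0] ts(2) by simp
  have "X \<in> build n ts c e" if X: "X \<in> S" for X
  proof (cases X)
    case (Pu a e')
    have an: "a < n" using X S(1) Pu unfolding tagged_diags_def by auto
    define q where "q = (a + n - c) mod n"
    have aq: "a = vv n c q" using vv_repr[OF an cn] q_def by simp
    have qn: "q < n" unfolding q_def using n0 by simp
    have qQ: "q \<in> Q" unfolding Q_def using X Pu qn by (auto simp: aq[symmetric])
    have tag: "e' = e \<or> length ts = 1"
    proof (rule ccontr)
      assume h: "\<not> ?thesis"
      show False
      proof (cases "a = c")
        case False
        then show False using nc[OF X c] Pu h by simp
      next
        case True
        have "card Q \<noteq> 1" using h lenQ by simp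
        hence "Q \<noteq> {0}" by auto
        then obtain q' where q': "q' \<in> Q" "q' \<noteq> 0" using Qne by blast
        then obtain e'' where e'': "Pu (vv n c q') e'' \<in> S" "q' < n" unfolding Q_def by auto
        have "vv n c q' \<noteq> c" using vv_inj[of q' n 0 c] e''(2) q'(2) vc0 n0 by auto
        then show False using nc[OF e''(1) c] nc[OF e''(1) X] Pu True h by auto
      qed
    qed
    show ?thesis unfolding build_def PS_def using Pu aq qQ ts(2) tag by auto
  next
    case (Bd a b)
    have ab: "a < n" "b < n" "a \<noteq> b" "2 \<le> ccw_dist n a b"
      using X S(1) Bd unfolding tagged_diags_def by auto
    have "c \<notin> bd_inner n a b" using nc[OF X c] Bd by simp
    then obtain x where x: "a = vv n c x" "b = vv n c (x + ccw_dist n a b)" "x + ccw_dist n a b \<le> n"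
      using repr_bd[OF n0 ab(1,2) cn] by blast
    have dn: "ccw_dist n a b < n" using ccw_lt[OF n0] .
    have "(x, x + ccw_dist n a b) \<in> A" unfolding A_def using x dn ab X Bd by auto
    hence "(x, x + ccw_dist n a b) \<in> AL n ts" using ts(3) dn unfolding AL_def by auto
    then show ?thesis unfolding build_def bdimg_def using Bd x by (auto intro!: image_eqI)
  qed
  thus ?thesis using bt by blast
qed

lemma build_tri:
  assumes n: "2 \<le> n" and ts: "ts \<in> Btrees n"
  shows "build n ts p e \<in> Tri n"
proof -
  have sl: "sl ts = n" "ts \<noteq> []" using Btrees_sl[OF n ts] by auto
  have D: "build n ts p e \<subseteq> tagged_diags n" by (rule build_diags[OF n sl(1)])
  have N: "noncrossing n (build n ts p e)" by (rule build_noncrossing[OF n sl(1)])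
  have M: "S = build n ts p e" if S: "build n ts p e \<subseteq> S" "S \<subseteq> tagged_diags n" "noncrossing n S" for S
  proof -
    have "Pu (vv n p 0) e \<in> build n ts p e"
      unfolding build_def PS_def using zero_in_posl[OF sl(2)] by auto
    then obtain ts' where ts': "ts' \<in> Btrees n" "S \<subseteq> build n ts' (vv n p 0) e"
      using completion[OF n S(2,3)] S(1) by blast
    have sl': "sl ts' = n" "ts' \<noteq> []" using Btrees_sl[OF n ts'(1)] by auto
    have c1: "finite (build n ts' (vv n p 0) e)" "card (build n ts' (vv n p 0) e) = n"
      using build_card[OF n sl'] by auto
    have c2: "card (build n ts p e) = n" using build_card[OF n sl] by auto
    have "build n ts p e = build n ts' (vv n p 0) e"
      using card_subset_eq[OF c1(1)] S(1) ts'(2) c1(2) c2 by auto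
    thus ?thesis using S(1) ts'(2) by auto
  qed
  show ?thesis unfolding Tri_def triangulation_def using D N M by blast
qed

lemma card_edges:
  assumes "0 < n" "a < n" "b < n"
  shows "finite (bd_edges n a b) \<and> card (bd_edges n a b) = ccw_dist n a b"
proof -
  have a: "vv n a 0 = a" using assms vv_def by simp
  have b: "vv n a (ccw_dist n a b) = b" using ccw_add[OF assms(2,3)] vv_def by simp
  have "bd_edges n a b = vv n a ` {0..<ccw_dist n a b}"
    using edges_vv[OF assms(1), of 0 "ccw_dist n a b" a] ccw_lt[OF assms(1)] a b by simp
  moreover have "inj_on (vv n a) {0..<ccw_dist n a b}"
    by (rule inj_on_subset[OF vv_inj_on]) (use ccw_lt[OF assms(1), of a b] in auto)
  ultimately show ?thesis by (simp add: card_image)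
qed

lemma vv_pair:
  assumes "a < n" "b < n" "c < n"
  shows "b = vv n c ((a + n - c) mod n + ccw_dist n a b)"
proof -
  define x where "x = (a + n - c) mod n"
  have ax: "vv n c x = a" unfolding x_def using vv_repr[OF assms(1,3)] by (rule sym)
  have "vv n c (x + ccw_dist n a b) = ((c + x) mod n + ccw_dist n a b) mod n"
    unfolding vv_def by (simp add: mod_add_left_eq add.assoc)
  also have "\<dots> = (a + ccw_dist n a b) mod n" using ax unfolding vv_def by simp
  also have "\<dots> = b" using ccw_add assms by simp
  finally show ?thesis unfolding x_def by (rule sym)
qed

lemma exists_free_vertex:
  assumes n: "2 \<le> n" and T: "T \<subseteq> tagged_diags n" "noncrossing n T"
  shows "\<exists>c<n. \<forall>a b. Bd a b \<in> T \<longrightarrow> c \<notin> bd_inner n a b"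
proof (cases "\<exists>a b. Bd a b \<in> T")
  case False
  then show ?thesis using n by (intro exI[of _ 0]) auto
next
  case True
  have n0: "0 < n" using n by simp
  define D where "D = {ccw_dist n a b | a b. Bd a b \<in> T}"
  have fD: "finite D" unfolding D_def
    by (rule finite_subset[of _ "{..<n}"]) (use ccw_lt[OF n0] in auto)
  have nD: "D \<noteq> {}" using True D_def by auto
  have "Max D \<in> D" using Max_in[OF fD nD] .
  then obtain a b where ab: "Bd a b \<in> T" "ccw_dist n a b = Max D" unfolding D_def by auto
  have dmax: "ccw_dist n a' b' \<le> ccw_dist n a b" if "Bd a' b' \<in> T" for a' b'
    using Max_ge[OF fD] that ab(2) unfolding D_def by auto
  define d where "d = ccw_dist n a b"
  have abn: "a < n" "b < n" "2 \<le> d" using ab(1) T(1) d_def unfolding tagged_diags_def by auto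
  have dn: "d < n" using ccw_lt[OF n0] d_def by simp
  have bn: "b < n" by (fact abn(2))
  have "\<forall>a' b'. Bd a' b' \<in> T \<longrightarrow> b \<notin> bd_inner n a' b'"
  proof (intro allI impI notI)
    fix a' b' assume ab': "Bd a' b' \<in> T" "b \<in> bd_inner n a' b'"
    define d' where "d' = ccw_dist n a' b'"
    have abn': "a' < n" "b' < n" using ab'(1) T(1) unfolding tagged_diags_def by auto
    have dn': "d' < n" using ccw_lt[OF n0] d'_def by simp
    have dd': "d' \<le> d" using dmax[OF ab'(1)] d_def d'_def by simp
    have av: "a = vv n b (n - d)"
    proof -
      have "vv n b (n - d) = ((a + d) mod n + (n - d)) mod n" using ccw_add[OF abn(1,2)] d_def vv_def by simp
      also have "\<dots> = (a + d + (n - d)) mod n" by (simp add: mod_add_left_eq)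
      also have "\<dots> = a" using dn abn by simp
      finally show ?thesis by simp
    qed
    have bv: "vv n b n = b" using bn vv_def by simp
    have E: "bd_edges n a b = vv n b ` {n - d..<n}"
      using edges_vv[OF n0, of "n - d" n b] dn av bv by simp
    define x' where "x' = (a' + n - b) mod n"
    have x'n: "x' < n" using n0 x'_def by simp
    have av': "a' = vv n b x'" unfolding x'_def by (rule vv_repr[OF abn'(1) bn])
    have bv': "b' = vv n b (x' + d')" unfolding x'_def d'_def by (rule vv_pair[OF abn' bn])
    have E': "bd_edges n a' b' = vv n b ` {x'..<x' + d'}"
      using edges_vv[OF n0, of x' "x' + d'" b] dn' av' bv' by simp
    have I': "bd_inner n a' b' = vv n b ` {x'<..<x' + d'}"
      using inner_vv[OF n0, of x' "x' + d'" b] dn' av' bv' by simp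
    have b0: "vv n b 0 = b" using bn vv_def by simp
    have "vv n b 0 \<in> vv n b ` {x'<..<x' + d'}" using ab'(2) I' b0 by simp
    then obtain z where z0: "z \<in> {x'<..<x' + d'}" "vv n b 0 = vv n b z" by blast
    hence z: "x' < z" "z < x' + d'" "vv n b z = vv n b 0" by auto
    have zn: "z = n"
    proof (cases "z < n")
      case True
      then show ?thesis using vv_inj[of z n 0 b] z n0 by simp
    next
      case False
      hence "vv n b (z - n) = vv n b 0" using z(3) vv_add_n[of n b "z - n"] by simp
      moreover have "z - n < n" using z x'n dn' by simp
      ultimately have "z - n = 0" using vv_inj[of "z - n" n 0 b] n0 by simp
      then show ?thesis using False by simp
    qed
    have "n - 1 \<in> {x'..<x' + d'}" "n - 1 \<in> {n - d..<n}" using z zn abn(3) x'n by auto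
    hence w1: "vv n b (n - 1) \<in> bd_edges n a b \<inter> bd_edges n a' b'"
      unfolding E E' by blast
    have "n \<in> {x'..<x' + d'}" using z zn by auto
    hence w2: "vv n b n \<in> bd_edges n a' b'" unfolding E' by blast
    have w3: "vv n b n \<notin> bd_edges n a b"
    proof
      assume "vv n b n \<in> bd_edges n a b"
      then obtain y where y: "n - d \<le> y" "y < n" "vv n b y = vv n b 0" using E vv_n by auto
      hence "y = 0" using vv_inj[of y n 0 b] n0 by simp
      thus False using y dn by simp
    qed
    have "\<not> crosses n (Bd a b) (Bd a' b')" using T(2) ab(1) ab'(1) unfolding noncrossing_def by blast
    hence sub: "bd_edges n a b \<subseteq> bd_edges n a' b'" using w1 w2 w3 by auto
    have "bd_edges n a b \<noteq> bd_edges n a' b'" using w2 w3 by auto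
    hence "card (bd_edges n a b) < card (bd_edges n a' b')"
      using psubset_card_mono card_edges[OF n0 abn'] sub by blast
    thus False using card_edges[OF n0 abn(1,2)] card_edges[OF n0 abn'] d_def d'_def dd' by simp
  qed
  thus ?thesis using bn by blast
qed

lemma exists_pu:
  assumes n: "2 \<le> n" and T: "T \<in> Tri n"
  shows "\<exists>c e. Pu c e \<in> T"
proof (rule ccontr)
  assume np: "\<not> ?thesis"
  have T': "T \<subseteq> tagged_diags n" "noncrossing n T"
    "\<And>S. T \<subseteq> S \<Longrightarrow> S \<subseteq> tagged_diags n \<Longrightarrow> noncrossing n S \<Longrightarrow> S = T"
    using T unfolding Tri_def triangulation_def by blast+
  obtain c where c: "c < n" "\<forall>a b. Bd a b \<in> T \<longrightarrow> c \<notin> bd_inner n a b"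
    using exists_free_vertex[OF n T'(1,2)] by blast
  let ?S = "insert (Pu c True) T"
  have "?S \<subseteq> tagged_diags n" using T'(1) c(1) unfolding tagged_diags_def by auto
  moreover have "noncrossing n ?S"
    unfolding noncrossing_def
  proof (intro ballI)
    fix X Y assume "X \<in> ?S" "Y \<in> ?S"
    moreover have "\<not> crosses n (Pu c True) Z" "\<not> crosses n Z (Pu c True)" if "Z \<in> T" for Z
      using that np c(2) by (cases Z; auto)+
    moreover have "\<not> crosses n (Pu c True) (Pu c True)" by simp
    ultimately show "\<not> crosses n X Y" using T'(2) unfolding noncrossing_def by blast
  qed
  ultimately have "?S = T" using T'(3) by blast
  thus False using np by blast
qed

lemma tri_build:
  assumes n: "2 \<le> n" and T: "T \<in> Tri n"
  shows "\<exists>ts c e. ts \<in> Btrees n \<and> c < n \<and> T = build n ts c e"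
proof -
  have T': "T \<subseteq> tagged_diags n" "noncrossing n T"
    "\<And>S. T \<subseteq> S \<Longrightarrow> S \<subseteq> tagged_diags n \<Longrightarrow> noncrossing n S \<Longrightarrow> S = T"
    using T unfolding Tri_def triangulation_def by blast+
  obtain c e where c: "Pu c e \<in> T" using exists_pu[OF n T] by blast
  have cn: "c < n" using c T'(1) unfolding tagged_diags_def by auto
  obtain ts where ts: "ts \<in> Btrees n" "T \<subseteq> build n ts c e" using completion[OF n T'(1,2) c] by blast
  have sl: "sl ts = n" using Btrees_sl[OF n ts(1)] by simp
  have "build n ts c e = T"
    using T'(3)[OF ts(2) build_diags[OF n sl] build_noncrossing[OF n sl]] .
  thus ?thesis using ts(1) cn by blast
qed

lemma bd_in_build:
  assumes "2 \<le> n" "sl ts = n" "x < y" "y \<le> n" "y - x < n"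
  shows "Bd (vv n p x) (vv n p y) \<in> build n ts p e \<longleftrightarrow> (x, y) \<in> AL n ts"
proof
  assume "Bd (vv n p x) (vv n p y) \<in> build n ts p e"
  then obtain x' y' where h: "(x', y') \<in> AL n ts" "vv n p x = vv n p x'" "vv n p y = vv n p y'"
    unfolding build_def PS_def bdimg_def by auto
  have "x' < y'" "y' \<le> n" using AL_bounds[OF assms(2) h(1)] by auto
  hence "x = x' \<and> y = y'" using lin_inj[of x y n x' y' p] assms h by simp
  thus "(x, y) \<in> AL n ts" using h by simp
next
  assume "(x, y) \<in> AL n ts"
  thus "Bd (vv n p x) (vv n p y) \<in> build n ts p e" unfolding build_def bdimg_def by force
qed

lemma side_build:
  assumes "2 \<le> n" "sl ts = n" "x < y" "y \<le> n" "y - x < n"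
  shows "side n (build n ts p e) (vv n p x) (vv n p y) \<longleftrightarrow> y - x = 1 \<or> (x, y) \<in> AL n ts"
  unfolding side_def using bd_in_build[OF assms] ccw_vv[of n x y p] assms by simp

lemma core_uniq:
  assumes lam: "\<forall>P\<in>A. \<forall>Q\<in>A. lam P Q"
    and l: "2 \<le> L \<Longrightarrow> (s, s + L) \<in> A" and r: "2 \<le> R \<Longrightarrow> (s + L, s + L + R) \<in> A"
    and lr: "1 \<le> L" "1 \<le> R" and m: "s < m" "m < s + L + R"
    and s1: "m - s = 1 \<or> (s, m) \<in> A" and s2: "s + L + R - m = 1 \<or> (m, s + L + R) \<in> A"
  shows "m = s + L"
proof (rule ccontr)
  assume ne: "m \<noteq> s + L"
  show False
  proof (cases "m < s + L")
    case True
    hence "2 \<le> L" using m by simp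
    hence a: "(s, s + L) \<in> A" by (rule l)
    have b: "(m, s + L + R) \<in> A" using s2 True lr by auto
    have "lam (s, s + L) (m, s + L + R)" using lam a b by blast
    then show False using True m lr by auto
  next
    case False
    hence gt: "s + L < m" using ne by simp
    hence "2 \<le> R" using m by simp
    hence a: "(s + L, s + L + R) \<in> A" by (rule r)
    have b: "(s, m) \<in> A" using s1 gt lr by auto
    have "lam (s, m) (s + L, s + L + R)" using lam a b by blast
    then show False using gt m lr by auto
  qed
qed

lemma AL_lam: "\<forall>P\<in>AL n ts. \<forall>Q\<in>AL n ts. lam P Q"
  using arcsL_lam unfolding AL_def by blast

lemma subf_build:
  assumes n: "2 \<le> n" "sl ts = n"
  shows "polyL t s \<subseteq> AL n ts \<Longrightarrow> s + leaves t \<le> n \<Longrightarrow> leaves t < n \<Longrightarrow> leaves t \<le> k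
    \<Longrightarrow> subf n (build n ts p e) k (vv n p s) (vv n p (s + leaves t)) = t"
proof (induction t arbitrary: s k)
  case Lf
  then obtain k' where k: "k = Suc k'" by (cases k) auto
  have "ccw_dist n (vv n p s) (vv n p (s + 1)) = 1" using ccw_vv[of n s "s + 1" p] n by simp
  then show ?case using k by simp
next
  case (Nd l r)
  let ?B = "build n ts p e"
  let ?L = "leaves l" and ?R = "leaves r"
  have lr: "1 \<le> ?L" "1 \<le> ?R" by (rule leaves_pos)+
  obtain k' where k: "k = Suc k'" using Nd.prems(4) lr by (cases k) auto
  have n0: "0 < n" using n by simp
  have tn: "?L + ?R < n" "s + ?L + ?R \<le> n" using Nd.prems by auto
  have cd: "ccw_dist n (vv n p s) (vv n p (s + (?L + ?R))) = ?L + ?R"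
    using ccw_vv[of n s "s + (?L + ?R)" p] n0 tn by simp
  have sub: "polyL l s \<subseteq> AL n ts" "polyL r (s + ?L) \<subseteq> AL n ts" using Nd.prems(1) by auto
  have inL: "2 \<le> ?L \<Longrightarrow> (s, s + ?L) \<in> AL n ts" using polyL_top[of l s] sub(1) by blast
  have inR: "2 \<le> ?R \<Longrightarrow> (s + ?L, s + ?L + ?R) \<in> AL n ts" using polyL_top[of r "s + ?L"] sub(2) by auto
  define P where "P = (\<lambda>v. v \<in> bd_inner n (vv n p s) (vv n p (s + (?L + ?R))) \<and>
      side n ?B (vv n p s) v \<and> side n ?B v (vv n p (s + (?L + ?R))))"
  have inner: "bd_inner n (vv n p s) (vv n p (s + (?L + ?R))) = vv n p ` {s<..<s + (?L + ?R)}"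
    using inner_vv[of n s "s + (?L + ?R)" p] n0 tn by simp
  have sideL: "side n ?B (vv n p s) (vv n p m) \<longleftrightarrow> m - s = 1 \<or> (s, m) \<in> AL n ts"
    if "s < m" "m < s + ?L + ?R" for m
    using side_build[OF n, of s m p e] that tn by simp
  have sideR: "side n ?B (vv n p m) (vv n p (s + (?L + ?R))) \<longleftrightarrow> s + ?L + ?R - m = 1 \<or> (m, s + ?L + ?R) \<in> AL n ts"
    if "s < m" "m < s + ?L + ?R" for m
    using side_build[OF n, of m "s + (?L + ?R)" p e] that tn by (simp add: add.assoc)
  have Pv0: "P (vv n p (s + ?L))"
    unfolding P_def inner using sideL[of "s + ?L"] sideR[of "s + ?L"] lr inL inR
    by (auto simp: add.assoc)
  have Puniq: "v = vv n p (s + ?L)" if "P v" for v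
  proof -
    have "v \<in> vv n p ` {s<..<s + (?L + ?R)}" using that unfolding P_def inner by simp
    then obtain m where m0: "m \<in> {s<..<s + (?L + ?R)}" "v = vv n p m" by blast
    hence m: "s < m" "m < s + ?L + ?R" "v = vv n p m" by auto
    have "m = s + ?L"
    proof (rule core_uniq[OF AL_lam inL inR lr m(1,2)])
      show "m - s = 1 \<or> (s, m) \<in> AL n ts" using that m sideL[OF m(1,2)] unfolding P_def by simp
      show "s + ?L + ?R - m = 1 \<or> (m, s + ?L + ?R) \<in> AL n ts"
        using that m sideR[OF m(1,2)] unfolding P_def by simp
    qed
    thus ?thesis using m by simp
  qed
  have THE: "(THE v. P v) = vv n p (s + ?L)" using the_equality[of P, OF Pv0 Puniq] by blast
  have IHl: "subf n ?B k' (vv n p s) (vv n p (s + ?L)) = l"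
    using Nd.IH(1)[OF sub(1)] tn k Nd.prems(4) lr by simp
  have IHr: "subf n ?B k' (vv n p (s + ?L)) (vv n p (s + ?L + ?R)) = r"
    using Nd.IH(2)[OF sub(2)] tn k Nd.prems(4) lr by (simp add: add.assoc)
  have "subf n ?B k (vv n p s) (vv n p (s + leaves (Nd l r)))
      = Nd (subf n ?B k' (vv n p s) (THE v. P v)) (subf n ?B k' (THE v. P v) (vv n p (s + (?L + ?R))))"
    using k cd lr unfolding P_def by (simp add: Let_def)
  also have "\<dots> = Nd l r" using THE IHl IHr by (simp add: add.assoc)
  finally show ?case .
qed

lemma sorted_list_of_set_strict: "sorted_wrt (<) xs \<Longrightarrow> sorted_list_of_set (set xs) = xs"
  by (simp add: sorted_list_of_set_sort_remdups strict_sorted_iff distinct_remdups_id sorted_sort_id)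

lemma sorted_rot:
  assumes n0: "0 < n" and s: "sorted_wrt (<) qs" and b: "\<forall>q\<in>set qs. q < n"
  shows "\<exists>m. sorted_list_of_set (vv n p ` set qs) = rotate m (map (vv n p) qs)"
proof -
  define p' where "p' = p mod n"
  have p'n: "p' < n" using n0 p'_def by simp
  have f: "vv n p q = (p' + q) mod n" for q unfolding vv_def p'_def by (simp add: mod_add_left_eq)
  define P where "P = (\<lambda>q. p' + q < n)"
  define L1 where "L1 = takeWhile P qs"
  define L2 where "L2 = dropWhile P qs"
  have qs: "qs = L1 @ L2" unfolding L1_def L2_def by simp
  have L1P: "\<forall>q\<in>set L1. P q" unfolding L1_def by (meson set_takeWhileD)
  have L2P: "\<forall>q\<in>set L2. \<not> P q"
  proof (cases L2)
    case Nil then show ?thesis by simp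
  next
    case (Cons a L2')
    have "\<not> P a" using Cons unfolding L2_def by (metis dropWhile_eq_Cons_conv)
    moreover have "\<forall>q\<in>set L2'. a < q" using s qs Cons by (simp add: sorted_wrt_append)
    ultimately show ?thesis using Cons unfolding P_def by auto
  qed
  have v1: "vv n p q = p' + q" if "q \<in> set L1" for q using L1P that f P_def by simp
  have v2: "vv n p q = p' + q - n" if "q \<in> set L2" for q
  proof -
    have "n \<le> p' + q" "q < n" using L2P that P_def b qs by auto
    hence "(p' + q) mod n = p' + q - n" using p'n by (simp add: mod_if)
    thus ?thesis using f by simp
  qed
  let ?xs = "map (vv n p) L2 @ map (vv n p) L1"
  have "sorted_wrt (<) ?xs"
    unfolding sorted_wrt_append
  proof (intro conjI ballI)
    have sL: "sorted_wrt (<) L1" "sorted_wrt (<) L2" using s qs by (simp_all add: sorted_wrt_append)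
    show "sorted_wrt (<) (map (vv n p) L2)"
      unfolding sorted_wrt_map
    proof (rule sorted_wrt_mono_rel[OF _ sL(2)])
      fix x y assume "x \<in> set L2" "y \<in> set L2" "x < y"
      thus "vv n p x < vv n p y" using v2 L2P P_def by auto
    qed
    show "sorted_wrt (<) (map (vv n p) L1)"
      unfolding sorted_wrt_map
    proof (rule sorted_wrt_mono_rel[OF _ sL(1)])
      fix x y assume "x \<in> set L1" "y \<in> set L1" "x < y"
      thus "vv n p x < vv n p y" using v1 by auto
    qed
    fix x y assume "x \<in> set (map (vv n p) L2)" "y \<in> set (map (vv n p) L1)"
    then obtain a c where "a \<in> set L2" "c \<in> set L1" "x = vv n p a" "y = vv n p c" by auto
    moreover have "a < n" using b qs \<open>a \<in> set L2\<close> by auto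
    ultimately show "x < y" using v1 v2 L2P P_def by auto
  qed
  hence "sorted_list_of_set (set ?xs) = ?xs" by (rule sorted_list_of_set_strict)
  moreover have "set ?xs = vv n p ` set qs" using qs by auto
  moreover have "?xs = rotate (length L1) (map (vv n p) qs)"
    using qs rotate_append[of "map (vv n p) L1" "map (vv n p) L2"] by simp
  ultimately show ?thesis by metis
qed

lemma map_rot:
  assumes "length ws = k" "0 < k"
  shows "map (\<lambda>i. F (rotate m ws ! i) (rotate m ws ! ((i + 1) mod k))) [0..<k]
       = rotate m (map (\<lambda>i. F (ws ! i) (ws ! ((i + 1) mod k))) [0..<k])"
proof (rule nth_equalityI)
  show "length (map (\<lambda>i. F (rotate m ws ! i) (rotate m ws ! ((i + 1) mod k))) [0..<k]) =
    length (rotate m (map (\<lambda>i. F (ws ! i) (ws ! ((i + 1) mod k))) [0..<k]))" by simp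
  fix i assume "i < length (map (\<lambda>i. F (rotate m ws ! i) (rotate m ws ! ((i + 1) mod k))) [0..<k])"
  hence i: "i < k" by simp
  have e: "(m + Suc i mod k) mod k = Suc ((m + i) mod k) mod k"
    by (simp add: mod_simps)
  show "map (\<lambda>i. F (rotate m ws ! i) (rotate m ws ! ((i + 1) mod k))) [0..<k] ! i =
    rotate m (map (\<lambda>i. F (ws ! i) (ws ! ((i + 1) mod k))) [0..<k]) ! i"
    using i assms by (simp add: nth_rotate e)
qed

lemma sigma_single:
  assumes n: "2 \<le> n" and ts: "ts = [Nd l r]" "sl ts = n"
  shows "sigma_tri n (build n ts p e) = ts"
proof -
  let ?B = "build n ts p e"
  let ?L = "leaves l" and ?R = "leaves r"
  have lr: "1 \<le> ?L" "1 \<le> ?R" by (rule leaves_pos)+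
  have n0: "0 < n" using n by simp
  have LR: "?L + ?R = n" using ts by simp
  have slen: "sl ts = n" by (fact ts(2))
  have len: "length ts = 1" using ts by simp
  have PSe: "PS n ts p e = {Pu (vv n p 0) True, Pu (vv n p 0) False}"
    unfolding PS_def using posl_single[OF len, of 0] len by auto
  have pu: "Pu c e' \<in> ?B \<longleftrightarrow> c = vv n p 0" for c e'
    unfolding build_def bdimg_def using PSe by auto
  have ex: "\<exists>c. Pu c True \<in> ?B \<and> Pu c False \<in> ?B" using pu by auto
  have theC: "(THE c. Pu c True \<in> ?B \<and> Pu c False \<in> ?B) = vv n p 0"
    using pu by auto
  have ALt: "AL n ts = polyL (Nd l r) 0 - {(0, n)}" using AL_eq[OF slen] ts by simp
  have polyl: "polyL l 0 \<subseteq> AL n ts"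
  proof
    fix P assume "P \<in> polyL l 0"
    moreover obtain x y where "P = (x, y)" by force
    ultimately show "P \<in> AL n ts" using ALt polyL_bounds[of x y l 0] lr LR by auto
  qed
  have polyr: "polyL r ?L \<subseteq> AL n ts"
  proof
    fix P assume "P \<in> polyL r ?L"
    moreover obtain x y where "P = (x, y)" by force
    ultimately show "P \<in> AL n ts" using ALt polyL_bounds[of x y r ?L] lr LR by auto
  qed
  have inL: "2 \<le> ?L \<Longrightarrow> (0, 0 + ?L) \<in> AL n ts" using polyL_top[of l 0] polyl by auto
  have inR: "2 \<le> ?R \<Longrightarrow> (0 + ?L, 0 + ?L + ?R) \<in> AL n ts" using polyL_top[of r ?L] polyr by auto
  have vn: "vv n p n = vv n p 0" by (rule vv_n)
  define Pv where "Pv = (\<lambda>v. v < n \<and> v \<noteq> vv n p 0 \<and> side n ?B (vv n p 0) v \<and> side n ?B v (vv n p 0))"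
  have sideL: "side n ?B (vv n p 0) (vv n p m) \<longleftrightarrow> m - 0 = 1 \<or> (0, m) \<in> AL n ts"
    if "0 < m" "m < n" for m
    using side_build[OF n slen, of 0 m p e] that by simp
  have sideR: "side n ?B (vv n p m) (vv n p 0) \<longleftrightarrow> 0 + ?L + ?R - m = 1 \<or> (m, 0 + ?L + ?R) \<in> AL n ts"
    if "0 < m" "m < n" for m
    using side_build[OF n slen, of m n p e] that vn LR by simp
  have ne: "vv n p ?L \<noteq> vv n p 0" using vv_inj[of ?L n 0 p] lr LR by auto
  have Pv0: "Pv (vv n p ?L)"
    unfolding Pv_def using vv_lt[OF n0] ne sideL[of ?L] sideR[of ?L] lr LR inL inR by auto
  have Puniq: "v = vv n p ?L" if "Pv v" for v
  proof -
    define m where "m = (v + n - p mod n) mod n"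
    have vn': "v < n" using that Pv_def by simp
    have vm: "v = vv n p m" using vv_repr[OF vn', of "p mod n"] n0 vv_modp m_def by simp
    have mn: "m < n" using m_def n0 by simp
    have m0: "m \<noteq> 0"
    proof
      assume "m = 0"
      hence "v = vv n p 0" using vm by simp
      thus False using that unfolding Pv_def by simp
    qed
    have "m = 0 + ?L"
    proof (rule core_uniq[OF AL_lam inL inR lr])
      show "0 < m" "m < 0 + ?L + ?R" using m0 mn LR by auto
      show "m - 0 = 1 \<or> (0, m) \<in> AL n ts" using that sideL[of m] m0 mn vm unfolding Pv_def by auto
      show "0 + ?L + ?R - m = 1 \<or> (m, 0 + ?L + ?R) \<in> AL n ts"
        using that sideR[of m] m0 mn vm unfolding Pv_def by auto
    qed
    thus ?thesis using vm by simp
  qed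
  have theV: "(THE v. Pv v) = vv n p ?L" using the_equality[of Pv, OF Pv0 Puniq] by blast
  have c1: "ccw_dist n (vv n p 0) (vv n p ?L) = ?L" using ccw_vv[of n 0 ?L p] lr LR n0 by simp
  have c2: "ccw_dist n (vv n p ?L) (vv n p (?L + ?R)) = ?R" using ccw_vv[of n ?L "?L + ?R" p] lr LR n0 by simp
  have s1: "subt n ?B (vv n p 0) (vv n p ?L) = l"
    unfolding subt_def c1 using subf_build[OF n slen polyl, of ?L p e] lr LR by simp
  have s2: "subt n ?B (vv n p ?L) (vv n p 0) = r"
  proof -
    have "subt n ?B (vv n p ?L) (vv n p (?L + ?R)) = r"
      unfolding subt_def c2 using subf_build[OF n slen polyr, of ?R p e] lr LR by simp
    thus ?thesis using LR vn by simp
  qed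
  show ?thesis unfolding sigma_tri_def using ex theC theV[unfolded Pv_def] s1 s2 ts
    by (simp add: Let_def)
qed

lemma sl_split: "sl ts = sl (take j ts) + sl (drop j ts)"
  by (metis append_take_drop_id map_append sum_list_append)

lemma sl_take_Suc: "i < length ts \<Longrightarrow> sl (take (Suc i) ts) = sl (take i ts) + leaves (ts ! i)"
  by (simp add: take_Suc_conv_app_nth)

lemma leaves_nth_lt:
  assumes "2 \<le> length ts" "i < length ts"
  shows "leaves (ts ! i) < sl ts"
proof -
  have "sl ts = sl (take (Suc i) ts) + sl (drop (Suc i) ts)" by (rule sl_split)
  also have "\<dots> = sl (take i ts) + leaves (ts ! i) + sl (drop (Suc i) ts)"
    using sl_take_Suc[OF assms(2)] by simp
  finally have e: "sl ts = sl (take i ts) + leaves (ts ! i) + sl (drop (Suc i) ts)" .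
  have "i \<le> sl (take i ts)" using length_le_sl[of "take i ts"] assms by simp
  moreover have "length ts - Suc i \<le> sl (drop (Suc i) ts)" using length_le_sl[of "drop (Suc i) ts"] by simp
  ultimately show ?thesis using e assms by linarith
qed

lemma sigma_multi:
  assumes n: "2 \<le> n" and slen: "sl ts = n" and len: "2 \<le> length ts"
  shows "\<exists>m. sigma_tri n (build n ts p e) = rotate m ts"
proof -
  let ?B = "build n ts p e"
  define k where "k = length ts"
  define qs where "qs = posl ts 0"
  define ws where "ws = map (vv n p) qs"
  have n0: "0 < n" using n by simp
  have k0: "0 < k" "length ws = k" "length qs = k" using len k_def ws_def qs_def by auto
  have pu: "Pu c e' \<in> ?B \<longleftrightarrow> e' = e \<and> c \<in> vv n p ` set qs" for c e'
    unfolding build_def bdimg_def PS_def qs_def using len by auto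
  have nex: "\<not> (\<exists>c. Pu c True \<in> ?B \<and> Pu c False \<in> ?B)" using pu by auto
  have cs: "{c. \<exists>e'. Pu c e' \<in> ?B} = vv n p ` set qs" using pu by auto
  obtain m where m: "sorted_list_of_set (vv n p ` set qs) = rotate m ws"
    using sorted_rot[OF n0 posl_sorted[of ts 0], of p] posl0_bounds[OF slen] qs_def ws_def by auto
  have inner: "map (\<lambda>i. subt n ?B (ws ! i) (ws ! ((i + 1) mod k))) [0..<k] = ts"
  proof (rule nth_equalityI)
    show "length (map (\<lambda>i. subt n ?B (ws ! i) (ws ! ((i + 1) mod k))) [0..<k]) = length ts"
      using k_def by simp
    fix i assume "i < length (map (\<lambda>i. subt n ?B (ws ! i) (ws ! ((i + 1) mod k))) [0..<k])"
    hence i: "i < k" by simp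
    define s where "s = sl (take i ts)"
    define L where "L = leaves (ts ! i)"
    have wi: "ws ! i = vv n p s" using i k0 posl_nth[of i ts 0] unfolding ws_def qs_def s_def k_def by simp
    have sL: "s + L = sl (take (Suc i) ts)" using sl_take_Suc[of i ts] i k_def s_def L_def by simp
    have wi1: "ws ! ((i + 1) mod k) = vv n p (s + L)"
    proof (cases "Suc i < k")
      case True
      then show ?thesis using posl_nth[of "Suc i" ts 0] sL unfolding ws_def qs_def k_def by simp
    next
      case False
      hence "Suc i = k" using i by simp
      hence "s + L = n" "(i + 1) mod k = 0" using sL slen k_def by auto
      moreover have "ws ! 0 = vv n p 0" using posl_nth[of 0 ts 0] k0 unfolding ws_def qs_def k_def by simp
      ultimately show ?thesis using vv_n by simp
    qed
    have Ln: "L < n" using leaves_nth_lt[OF len, of i] i k_def slen L_def by simp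
    have sLn: "s + L \<le> n" using sL sl_split[of ts "Suc i"] slen by simp
    have sub: "polyL (ts ! i) s \<subseteq> AL n ts"
    proof
      fix P assume P: "P \<in> polyL (ts ! i) s"
      obtain x y where xy: "P = (x, y)" by force
      have "P \<in> arcsL ts 0" using polyL_nth_sub[of i ts 0] P i k_def posl_nth[of i ts 0] s_def by auto
      moreover have "y - x < n" using polyL_bounds[of x y "ts ! i" s] P xy L_def Ln by auto
      ultimately show "P \<in> AL n ts" using xy AL_def by simp
    qed
    have cd: "ccw_dist n (vv n p s) (vv n p (s + L)) = L" using ccw_vv[of n s "s + L" p] n0 Ln by simp
    have "subt n ?B (ws ! i) (ws ! ((i + 1) mod k)) = ts ! i"
      unfolding wi wi1 subt_def cd using subf_build[OF n slen sub, of L p e] sLn Ln L_def by simp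
    thus "map (\<lambda>i. subt n ?B (ws ! i) (ws ! ((i + 1) mod k))) [0..<k] ! i = ts ! i" using i by simp
  qed
  have "sigma_tri n ?B = map (\<lambda>i. subt n ?B (rotate m ws ! i) (rotate m ws ! ((i + 1) mod k))) [0..<k]"
    unfolding sigma_tri_def if_not_P[OF nex] cs m Let_def using k0 by simp
  also have "\<dots> = rotate m (map (\<lambda>i. subt n ?B (ws ! i) (ws ! ((i + 1) mod k))) [0..<k])"
    by (rule map_rot[OF k0(2,1)])
  also have "\<dots> = rotate m ts" using inner by simp
  finally show ?thesis by blast
qed

lemma sigma_build:
  assumes n: "2 \<le> n" and ts: "ts \<in> Btrees n"
  shows "\<exists>m. sigma_tri n (build n ts p e) = rotate m ts"
proof -
  have slen: "sl ts = n" "ts \<noteq> []" using Btrees_sl[OF n ts] by auto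
  show ?thesis
  proof (cases "length ts = 1")
    case True
    then obtain t where t: "ts = [t]" by (cases ts) auto
    have "leaves t = n" using slen t by simp
    then obtain l r where "t = Nd l r" using n by (cases t) auto
    then show ?thesis using sigma_single[OF n _ slen(1), of l r p e] t by (intro exI[of _ 0]) simp
  next
    case False
    hence "2 \<le> length ts" using slen(2) by (cases ts) (auto simp: Suc_le_eq)
    then show ?thesis using sigma_multi[OF n slen(1)] by blast
  qed
qed

definition sh :: "nat \<Rightarrow> nat \<times> nat \<Rightarrow> nat \<times> nat" where
  "sh b P = (fst P + b, snd P + b)"

lemma polyL_shift: "polyL t (a + b) = sh b ` polyL t a"
proof (induction t arbitrary: a)
  case Lf then show ?case by simp
next
  case (Nd l r)
  have "polyL r (a + b + leaves l) = sh b ` polyL r (a + leaves l)"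
    using Nd.IH(2)[of "a + leaves l"] by (simp add: ac_simps)
  then show ?case using Nd.IH(1)[of a] by (simp add: sh_def image_Un ac_simps)
qed

lemma arcsL_shift: "arcsL ts (a + b) = sh b ` arcsL ts a"
proof (induction ts arbitrary: a)
  case Nil then show ?case by simp
next
  case (Cons t ts)
  have "arcsL ts (a + b + leaves t) = sh b ` arcsL ts (a + leaves t)"
    using Cons.IH[of "a + leaves t"] by (simp add: ac_simps)
  then show ?case using polyL_shift[of t a b] by (simp add: image_Un)
qed

lemma posl_shift: "posl ts (a + b) = map (\<lambda>q. q + b) (posl ts a)"
proof (induction ts arbitrary: a)
  case Nil then show ?case by simp
next
  case (Cons t ts)
  have e: "a + b + leaves t = (a + leaves t) + b" by simp
  show ?case by (simp only: posl.simps e Cons.IH list.map)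
qed

lemma posl_append: "posl (xs @ ys) a = posl xs a @ posl ys (a + sl xs)"
  by (induction xs arbitrary: a) (auto simp: ac_simps)

lemma arcsL_append: "arcsL (xs @ ys) a = arcsL xs a \<union> arcsL ys (a + sl xs)"
  by (induction xs arbitrary: a) (auto simp: ac_simps)

lemma bdimg_sh: "bdimg n p (sh b ` A) = bdimg n (p + b) A"
  unfolding bdimg_def sh_def image_image
  by (rule image_cong) (auto simp: vv_def ac_simps)

lemma vv_pn: "vv n (p + n) x = vv n p x"
proof -
  have "p + n + x = (p + x) + n" by simp
  thus ?thesis unfolding vv_def by (metis mod_add_self2)
qed

lemma bdimg_pn: "bdimg n (p + n) A = bdimg n p A"
  unfolding bdimg_def
  by (rule image_cong) (auto simp: vv_pn)

lemma bdimg_Un: "bdimg n p (A \<union> B) = bdimg n p A \<union> bdimg n p B"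
  unfolding bdimg_def by (simp add: image_Un)

lemma PS_multi: "length ts \<noteq> 1 \<Longrightarrow> PS n ts p e = (\<lambda>q. Pu (vv n p q) e) ` set (posl ts 0)"
  unfolding PS_def by auto

lemma AL_multi: "sl ts = n \<Longrightarrow> length ts \<noteq> 1 \<Longrightarrow> AL n ts = arcsL ts 0"
  using AL_eq zero_n_arcsL by blast

lemma build_rot1:
  assumes slen: "sl (t # ts) = n" and len: "ts \<noteq> []"
  shows "build n (ts @ [t]) (p + leaves t) e = build n (t # ts) p e"
proof -
  let ?a = "leaves t"
  have l1: "length (ts @ [t]) \<noteq> 1" "length (t # ts) \<noteq> 1" using len by auto
  have sl2: "sl (ts @ [t]) = n" using slen by simp
  have n: "?a + sl ts = n" using slen by simp
  have "PS n (ts @ [t]) (p + ?a) e = (\<lambda>q. Pu (vv n (p + ?a) q) e) ` set (posl (ts @ [t]) 0)"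
    by (rule PS_multi[OF l1(1)])
  also have "\<dots> = (\<lambda>q. Pu (vv n p q) e) ` ((\<lambda>q. ?a + q) ` set (posl (ts @ [t]) 0))"
    by (simp add: image_image vv_shift)
  also have "(\<lambda>q. ?a + q) ` set (posl (ts @ [t]) 0) = set (posl ts ?a) \<union> {n}"
    using posl_append[of ts "[t]" 0] posl_shift[of ts 0 ?a] n by (auto simp: ac_simps)
  finally have P2: "PS n (ts @ [t]) (p + ?a) e = (\<lambda>q. Pu (vv n p q) e) ` (set (posl ts ?a) \<union> {n})" .
  have P1: "PS n (t # ts) p e = (\<lambda>q. Pu (vv n p q) e) ` (set (posl ts ?a) \<union> {0})"
    using PS_multi[OF l1(2)] by auto
  have PS: "PS n (ts @ [t]) (p + ?a) e = PS n (t # ts) p e"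
    unfolding P1 P2 using vv_n[of n p] by auto
  have "bdimg n (p + ?a) (AL n (ts @ [t])) = bdimg n (p + ?a) (arcsL ts 0 \<union> polyL t (sl ts))"
    using AL_multi[OF sl2 l1(1)] arcsL_append[of ts "[t]" 0] by simp
  also have "\<dots> = bdimg n p (sh ?a ` arcsL ts 0) \<union> bdimg n (p + ?a + sl ts) (polyL t 0)"
    using polyL_shift[of t 0 "sl ts"] by (simp add: bdimg_Un bdimg_sh)
  also have "\<dots> = bdimg n p (arcsL ts ?a) \<union> bdimg n p (polyL t 0)"
    using arcsL_shift[of ts 0 ?a] n bdimg_pn[of n p] by (simp add: add.assoc)
  also have "\<dots> = bdimg n p (AL n (t # ts))"
    using AL_multi[OF slen l1(2)] by (simp add: bdimg_Un Un_commute)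
  finally show ?thesis unfolding build_def using PS by simp
qed

lemma sl_rotate1: "sl (rotate1 xs) = sl xs"
  by (cases xs) auto

lemma sl_rotate: "sl (rotate j xs) = sl xs"
  by (induction j) (auto simp: sl_rotate1)

lemma build_rotate:
  assumes slen: "sl ts = n"
  shows "\<exists>q. build n (rotate j ts) q e = build n ts p e"
proof (induction j)
  case 0 then show ?case by auto
next
  case (Suc j)
  then obtain q where q: "build n (rotate j ts) q e = build n ts p e" by blast
  show ?case
  proof (cases "length ts \<le> 1")
    case True then show ?thesis using q by (intro exI[of _ q]) simp
  next
    case False
    obtain t ts' where tt: "rotate j ts = t # ts'" using False by (cases "rotate j ts") auto
    have "length (rotate j ts) = length ts" by simp
    hence ne: "ts' \<noteq> []" using False tt by auto
    have s: "sl (t # ts') = n" using sl_rotate[of j ts] tt slen by simp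
    have r: "rotate (Suc j) ts = ts' @ [t]" using tt by simp
    show ?thesis unfolding r using build_rot1[OF s ne, of q e] q tt by auto
  qed
qed

fun nrm :: "nat \<Rightarrow> tarc \<Rightarrow> tarc" where
  "nrm n (Bd a b) = Bd (a mod n) (b mod n)"
| "nrm n (Pu a e) = Pu (a mod n) e"

fun unrot :: "nat \<Rightarrow> tarc \<Rightarrow> tarc" where
  "unrot n (Bd a b) = Bd ((a + (n - 1)) mod n) ((b + (n - 1)) mod n)"
| "unrot n (Pu a e) = Pu ((a + (n - 1)) mod n) e"

lemma nrm_rot: "nrm n (rot_arc n x) = rot_arc n x"
  by (cases x) auto

lemma rot_nrm: "rot_arc n (nrm n x) = rot_arc n x"
  by (cases x) (auto simp: mod_simps)

lemma nrm_flip: "nrm n (flip_arc x) = flip_arc (nrm n x)"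
  by (cases x) auto

lemma flip_flip: "flip_arc (flip_arc x) = x"
  by (cases x) auto

lemma nrm_nrm: "nrm n (nrm n x) = nrm n x"
  by (cases x) auto

lemma unrot_rot: "0 < n \<Longrightarrow> unrot n (rot_arc n x) = nrm n x"
proof (cases x)
  case (Bd a b)
  assume n: "0 < n"
  have e: "((c + 1) mod n + (n - 1)) mod n = c mod n" for c
  proof -
    have "((c + 1) mod n + (n - 1)) mod n = (c + 1 + (n - 1)) mod n" by (simp add: mod_add_left_eq)
    also have "c + 1 + (n - 1) = c + n" using n by simp
    finally show ?thesis by simp
  qed
  show ?thesis using Bd e by simp
next
  case (Pu a e')
  assume n: "0 < n"
  have e: "((c + 1) mod n + (n - 1)) mod n = c mod n" for c
  proof -
    have "((c + 1) mod n + (n - 1)) mod n = (c + 1 + (n - 1)) mod n" by (simp add: mod_add_left_eq)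
    also have "c + 1 + (n - 1) = c + n" using n by simp
    finally show ?thesis by simp
  qed
  show ?thesis using Pu e by simp
qed

lemma vv_rot: "Suc (vv n p x) mod n = vv n (Suc p) x"
proof -
  have "((p + x) mod n + 1) mod n = (p + x + 1) mod n" by (rule mod_add_left_eq)
  moreover have "p + x + 1 = Suc p + x" by simp
  ultimately show ?thesis unfolding vv_def by simp
qed

lemma vv_unrot: "(vv n p x + (n - Suc 0)) mod n = vv n (p + (n - Suc 0)) x"
proof -
  have "((p + x) mod n + (n - Suc 0)) mod n = (p + x + (n - Suc 0)) mod n" by (rule mod_add_left_eq)
  moreover have "p + x + (n - Suc 0) = p + (n - Suc 0) + x" by simp
  ultimately show ?thesis unfolding vv_def by simp
qed

lemma vv_mod: "vv n p x mod n = vv n p x"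
  unfolding vv_def by simp

lemma PS_img: "PS n ts p e = (\<lambda>(q, e'). Pu (vv n p q) e') ` {(q, e'). q \<in> set (posl ts 0) \<and> (e' = e \<or> length ts = 1)}"
  unfolding PS_def by auto

lemma build_img: "f ` build n ts p e = build n ts p' e'"
  if "\<And>q e''. f (Pu (vv n p q) e'') = Pu (vv n p' q) (g e'')"
     "\<And>x y. f (Bd (vv n p x) (vv n p y)) = Bd (vv n p' x) (vv n p' y)"
     "\<And>e''. (e'' = e' \<or> length ts = 1) \<longleftrightarrow> (\<exists>e0. e'' = g e0 \<and> (e0 = e \<or> length ts = 1))"
  for f :: "tarc \<Rightarrow> tarc" and g
proof -
  note hyps = that
  let ?G = "{(q, e'). q \<in> set (posl ts 0) \<and> (e' = e \<or> length ts = 1)}"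
  let ?G' = "{(q, e''). q \<in> set (posl ts 0) \<and> (e'' = e' \<or> length ts = 1)}"
  have "f ` PS n ts p e = (\<lambda>(q, e0). Pu (vv n p' q) (g e0)) ` ?G"
    unfolding PS_img image_image by (rule image_cong) (auto simp: hyps(1))
  also have "\<dots> = (\<lambda>(q, e''). Pu (vv n p' q) e'') ` ((\<lambda>(q, e0). (q, g e0)) ` ?G)"
    by (simp add: image_image case_prod_beta)
  also have "(\<lambda>(q, e0). (q, g e0)) ` ?G = ?G'"
  proof (intro equalityI subsetI)
    fix P assume "P \<in> (\<lambda>(q, e0). (q, g e0)) ` ?G"
    thus "P \<in> ?G'" using hyps(3) by auto
  next
    fix P assume P: "P \<in> ?G'"
    obtain q e'' where qe: "P = (q, e'')" by force
    then obtain e0 where "e'' = g e0" "e0 = e \<or> length ts = 1" using P hyps(3) by auto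
    thus "P \<in> (\<lambda>(q, e0). (q, g e0)) ` ?G" using P qe by (auto intro!: image_eqI[of _ _ "(q, e0)"])
  qed
  finally have "f ` PS n ts p e = PS n ts p' e'" unfolding PS_img .
  moreover have "f ` bdimg n p (AL n ts) = bdimg n p' (AL n ts)"
    unfolding bdimg_def image_image by (rule image_cong) (auto simp: hyps(2))
  ultimately show ?thesis unfolding build_def image_Un by simp
qed

lemma rot_build: "rot_arc n ` build n ts p e = build n ts (p + 1) e"
  by (rule build_img[where g = id]) (auto simp: vv_rot)

lemma unrot_build: "unrot n ` build n ts p e = build n ts (p + (n - 1)) e"
  by (rule build_img[where g = id]) (auto simp: vv_unrot)

lemma flip_build: "flip_arc ` build n ts p e = build n ts p (\<not> e)"
  by (rule build_img[where g = Not]) auto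

lemma nrm_build: "nrm n ` build n ts p e = build n ts p e"
  by (rule build_img[where g = id]) (auto simp: vv_mod)

lemma nrm_tri: "T \<in> Tri n \<Longrightarrow> nrm n ` T = T"
proof -
  assume T: "T \<in> Tri n"
  hence sub: "T \<subseteq> tagged_diags n" unfolding Tri_def triangulation_def by blast
  have "nrm n x = x" if "x \<in> T" for x
    using sub that unfolding tagged_diags_def by (cases x) auto
  thus ?thesis by (simp add: image_cong[OF refl, of T "nrm n" id])
qed

lemma invariance:
  assumes n: "0 < n" and eq: "equivclp (tri_step n) X Y" and X: "nrm n ` X = build n ts p e"
  shows "\<exists>p' e'. nrm n ` Y = build n ts p' e'"
  using eq
proof (induction rule: equivclp_induct)
  case base then show ?case using X by blast
next
  case (step y z)
  from step.IH obtain p' e' where y: "nrm n ` y = build n ts p' e'" by blast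
  from step.hyps(2) show ?case
  proof (elim disjE)
    assume "tri_step n y z"
    then consider "z = rot_arc n ` y" | "z = flip_arc ` y" unfolding tri_step_def by blast
    then show ?thesis
    proof cases
      case 1
      have "nrm n ` z = rot_arc n ` (nrm n ` y)" unfolding 1 image_image by (simp add: nrm_rot rot_nrm)
      then show ?thesis using y rot_build by metis
    next
      case 2
      have "nrm n ` z = flip_arc ` (nrm n ` y)" unfolding 2 image_image by (simp add: nrm_flip)
      then show ?thesis using y flip_build by metis
    qed
  next
    assume "tri_step n z y"
    then consider "y = rot_arc n ` z" | "y = flip_arc ` z" unfolding tri_step_def by blast
    then show ?thesis
    proof cases
      case 1
      have yy: "nrm n ` y = y" unfolding 1 image_image by (simp add: nrm_rot)
      have "nrm n ` z = unrot n ` y" unfolding 1 image_image by (simp add: unrot_rot[OF n])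
      then show ?thesis using y yy unrot_build by metis
    next
      case 2
      have "z = flip_arc ` y" unfolding 2 image_image by (simp add: flip_flip)
      hence "nrm n ` z = flip_arc ` (nrm n ` y)" by (simp add: image_image nrm_flip)
      then show ?thesis using y flip_build by metis
    qed
  qed
qed

lemma build_modp: "build n ts (p mod n) e = build n ts p e"
  unfolding build_def PS_def bdimg_def by (simp add: vv_modp)

lemma builds_related:
  assumes n: "0 < n"
  shows "equivclp (tri_step n) (build n ts p e) (build n ts p' e')"
proof -
  have step_rot: "equivclp (tri_step n) (build n ts q e) (build n ts (q + j) e)" for q j
  proof (induction j)
    case 0 then show ?case by simp
  next
    case (Suc j)
    have "tri_step n (build n ts (q + j) e) (build n ts (q + Suc j) e)"
      unfolding tri_step_def using rot_build[of n ts "q + j" e] by simp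
    hence "equivclp (tri_step n) (build n ts (q + j) e) (build n ts (q + Suc j) e)"
      by (simp add: equivclp_def r_into_rtranclp symclpI)
    then show ?case using Suc.IH by (meson transpD transp_equivclp)
  qed
  define j where "j = p' mod n + n - p mod n"
  have "(p + j) mod n = p' mod n"
  proof -
    have "(p + j) mod n = (p mod n + j) mod n" by (simp add: mod_add_left_eq)
    also have "p mod n + j = p' mod n + n"
    proof -
      have "p mod n < n" using n by simp
      thus ?thesis unfolding j_def by linarith
    qed
    finally show ?thesis by simp
  qed
  hence b1: "build n ts (p + j) e = build n ts p' e" by (metis build_modp)
  have r1: "equivclp (tri_step n) (build n ts p e) (build n ts p' e)" using step_rot[of p j] b1 by simp
  have "equivclp (tri_step n) (build n ts p' e) (build n ts p' e')"
  proof (cases "e = e'")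
    case True then show ?thesis by simp
  next
    case False
    hence "tri_step n (build n ts p' e) (build n ts p' e')"
      unfolding tri_step_def using flip_build[of n ts p' e] by auto
    then show ?thesis by (simp add: equivclp_def r_into_rtranclp symclpI)
  qed
  with r1 show ?thesis by (meson transpD transp_equivclp)
qed

lemma equiv_tri: "equiv (Tri n) (tri_rel n)"
  unfolding equiv_def refl_on_def sym_def trans_def tri_rel_def
  by (auto intro: equivclp_sym dest: transpD[OF transp_equivclp])

lemma Btrees_rotate: "s \<in> Btrees n \<Longrightarrow> rotate k s \<in> Btrees n"
  unfolding Btrees_def root_leaves_def using sl_rotate[of k s] by auto

lemma rotate_inv: "\<exists>j. rotate j (rotate k s) = s"
proof (cases "s = []")
  case True then show ?thesis by simp
next
  case False
  have "rotate (length s - k mod length s) (rotate k s) = rotate (length s - k mod length s + k) s"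
    by (simp add: rotate_rotate)
  also have "\<dots> = s"
  proof (rule rotate_id)
    have "(length s - k mod length s + k) mod length s = (length s - k mod length s + k mod length s) mod length s"
      by (simp add: mod_add_right_eq)
    also have "length s - k mod length s + k mod length s = length s" using False
      by (simp add: le_add_diff_inverse2 less_imp_le)
    finally show "(length s - k mod length s + k) mod length s = 0" by simp
  qed
  finally show ?thesis by blast
qed

lemma equiv_b: "equiv (Btrees n) (brel n)"
  unfolding equiv_def refl_on_def sym_def trans_def brel_def
proof (intro conjI)
  show "{(s, t). s \<in> Btrees n \<and> t \<in> Btrees n \<and> (\<exists>k. t = rotate k s)} \<subseteq> Btrees n \<times> Btrees n" by auto
  show "\<forall>x\<in>Btrees n. (x, x) \<in> {(s, t). s \<in> Btrees n \<and> t \<in> Btrees n \<and> (\<exists>k. t = rotate k s)}"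
    by (auto intro: exI[of _ 0])
  show "\<forall>x y. (x, y) \<in> {(s, t). s \<in> Btrees n \<and> t \<in> Btrees n \<and> (\<exists>k. t = rotate k s)} \<longrightarrow>
     (y, x) \<in> {(s, t). s \<in> Btrees n \<and> t \<in> Btrees n \<and> (\<exists>k. t = rotate k s)}"
    using rotate_inv by (auto, metis)
  show "\<forall>x y z. (x, y) \<in> {(s, t). s \<in> Btrees n \<and> t \<in> Btrees n \<and> (\<exists>k. t = rotate k s)} \<longrightarrow>
     (y, z) \<in> {(s, t). s \<in> Btrees n \<and> t \<in> Btrees n \<and> (\<exists>k. t = rotate k s)} \<longrightarrow>
     (x, z) \<in> {(s, t). s \<in> Btrees n \<and> t \<in> Btrees n \<and> (\<exists>k. t = rotate k s)}"
    by (auto simp: rotate_rotate)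
qed

lemma cls_rep:
  assumes C: "C \<in> T_cls n"
  shows "(SOME T. T \<in> C) \<in> C \<and> (SOME T. T \<in> C) \<in> Tri n \<and> C = tri_rel n `` {SOME T. T \<in> C}"
proof -
  obtain T0 where T0: "C = tri_rel n `` {T0}" "T0 \<in> Tri n" using C unfolding T_cls_def by (rule quotientE)
  have "T0 \<in> C" using equiv_class_self[OF equiv_tri T0(2)] T0(1) by simp
  hence S: "(SOME T. T \<in> C) \<in> C" by (rule someI)
  hence r: "(T0, SOME T. T \<in> C) \<in> tri_rel n" using T0(1) by simp
  hence "(SOME T. T \<in> C) \<in> Tri n" unfolding tri_rel_def by simp
  moreover have "C = tri_rel n `` {SOME T. T \<in> C}"
    using T0 r equiv_class_eq_iff[OF equiv_tri] by metis
  ultimately show ?thesis using S by blast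
qed

lemma rel_build:
  assumes n: "0 < n" and r: "(T1, T2) \<in> tri_rel n" and T1: "T1 = build n ts p e"
  shows "\<exists>p' e'. T2 = build n ts p' e'"
proof -
  have eq: "equivclp (tri_step n) T1 T2" and T2: "T2 \<in> Tri n" using r unfolding tri_rel_def by auto
  have "nrm n ` T1 = build n ts p e" using T1 nrm_build by simp
  then obtain p' e' where "nrm n ` T2 = build n ts p' e'" using invariance[OF n eq] by blast
  thus ?thesis using nrm_tri[OF T2] by auto
qed

lemma sigma_class:
  assumes n: "2 \<le> n" and ts: "ts \<in> Btrees n"
  shows "brel n `` {sigma_tri n (build n ts p e)} = brel n `` {ts}"
proof -
  obtain m where m: "sigma_tri n (build n ts p e) = rotate m ts" using sigma_build[OF n ts] by blast
  have "(ts, rotate m ts) \<in> brel n" unfolding brel_def using ts Btrees_rotate by auto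
  thus ?thesis using m equiv_class_eq_iff[OF equiv_b] by metis
qed

theorem theorem7p1:
  fixes n :: nat
  assumes "5 \<le> n"
  shows "bij_betw (sigma_cls n) (T_cls n) (B_cls n)"
proof -
  have n: "2 \<le> n" and n0: "0 < n" using assms by auto
  have rep: "\<exists>ts c e. ts \<in> Btrees n \<and> (SOME T. T \<in> C) = build n ts c e \<and>
      sigma_cls n C = brel n `` {ts}" if C: "C \<in> T_cls n" for C
  proof -
    have r: "(SOME T. T \<in> C) \<in> Tri n" using cls_rep[OF C] by blast
    obtain ts c e where ts: "ts \<in> Btrees n" "(SOME T. T \<in> C) = build n ts c e"
      using tri_build[OF n r] by blast
    have "sigma_cls n C = brel n `` {ts}" unfolding sigma_cls_def ts(2) using sigma_class[OF n ts(1)] .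
    thus ?thesis using ts by blast
  qed
  show ?thesis unfolding bij_betw_def
  proof (intro conjI)
    show "inj_on (sigma_cls n) (T_cls n)"
    proof (rule inj_onI)
      fix C1 C2 assume C: "C1 \<in> T_cls n" "C2 \<in> T_cls n" "sigma_cls n C1 = sigma_cls n C2"
      obtain ts1 c1 e1 where t1: "ts1 \<in> Btrees n" "(SOME T. T \<in> C1) = build n ts1 c1 e1"
          "sigma_cls n C1 = brel n `` {ts1}" using rep[OF C(1)] by blast
      obtain ts2 c2 e2 where t2: "ts2 \<in> Btrees n" "(SOME T. T \<in> C2) = build n ts2 c2 e2"
          "sigma_cls n C2 = brel n `` {ts2}" using rep[OF C(2)] by blast
      have "(ts1, ts2) \<in> brel n" using eq_equiv_class_iff[OF equiv_b t1(1) t2(1)] t1(3) t2(3) C(3) by simp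
      then obtain k where k: "ts2 = rotate k ts1" unfolding brel_def by auto
      have sl1: "sl ts1 = n" using Btrees_sl[OF n t1(1)] by simp
      obtain q where q: "build n ts2 q e1 = build n ts1 c1 e1" using build_rotate[OF sl1, where j=k and p=c1 and e=e1] k by blast
      have "equivclp (tri_step n) (build n ts2 q e1) (build n ts2 c2 e2)" by (rule builds_related[OF n0])
      hence eq: "equivclp (tri_step n) (SOME T. T \<in> C1) (SOME T. T \<in> C2)" using q t1(2) t2(2) by simp
      have i1: "(SOME T. T \<in> C1) \<in> Tri n" "C1 = tri_rel n `` {SOME T. T \<in> C1}" using cls_rep[OF C(1)] by auto
      have i2: "(SOME T. T \<in> C2) \<in> Tri n" "C2 = tri_rel n `` {SOME T. T \<in> C2}" using cls_rep[OF C(2)] by auto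
      have "((SOME T. T \<in> C1), (SOME T. T \<in> C2)) \<in> tri_rel n" unfolding tri_rel_def using eq i1 i2 by simp
      thus "C1 = C2" using i1(2) i2(2) equiv_class_eq_iff[OF equiv_tri] by metis
    qed
    show "sigma_cls n ` T_cls n = B_cls n"
    proof (intro equalityI subsetI)
      fix D assume "D \<in> sigma_cls n ` T_cls n"
      then obtain C where C: "C \<in> T_cls n" "D = sigma_cls n C" by blast
      obtain ts c e where "ts \<in> Btrees n" "sigma_cls n C = brel n `` {ts}" using rep[OF C(1)] by blast
      thus "D \<in> B_cls n" unfolding B_cls_def using C(2) quotientI by metis
    next
      fix D assume "D \<in> B_cls n"
      then obtain ts where ts: "D = brel n `` {ts}" "ts \<in> Btrees n" unfolding B_cls_def by (rule quotientE)
      let ?T = "build n ts 0 True"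
      have T: "?T \<in> Tri n" by (rule build_tri[OF n ts(2)])
      define C where "C = tri_rel n `` {?T}"
      have C: "C \<in> T_cls n" unfolding C_def T_cls_def using T by (rule quotientI)
      obtain T' where T': "T' = (SOME T. T \<in> C)" by blast
      have m: "T' \<in> C" using cls_rep[OF C] T' by simp
      have "(?T, T') \<in> tri_rel n" using m unfolding C_def by simp
      then obtain p' e' where b0: "T' = build n ts p' e'" using rel_build[OF n0] by blast
      have b: "(SOME T. T \<in> C) = build n ts p' e'" using b0 T' by simp
      have "sigma_cls n C = brel n `` {ts}" unfolding sigma_cls_def b using sigma_class[OF n ts(2)] .
      thus "D \<in> sigma_cls n ` T_cls n" using C ts(1) by blast
    qed
  qed
qed

end
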